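(* Let $G$ be a split connected reductive group, $M\subseteq G$ a Levi subgroup containing the maximal torus $T$, and $\lambda\in X^*(T)$. For every $w^M\in W^M$, $(w^M)^{-1}\mathrm{Adm}_M(\lambda)\,w^M\subseteq\mathrm{Adm}(\lambda)$.
   Context: $W^M=\{w\in W:\ell(s_\alpha w)>\ell(w)\text{ for all simple roots }\alpha\text{ of }M\}$. For $\lambda\in X^*(T)$, $\mathrm{Adm}(\lambda)=\{\tilde w\in\tilde W:\tilde w\le t_{w(\lambda)}\text{ for some }w\in W\}$, where $\tilde W=X^*(T)\rtimes W$ carries the Bruhat order $\le$ defined via the dominant base alcove (elements in different cosets of the affine Weyl group are incomparable); $\mathrm{Adm}_M(\lambda)\subseteq\tilde W_M=X^*(T)\rtimes W_M$ is defined in the same way for $M$ (with $M$'s dominant base alcove). *)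

theory Defs
  imports "HOL-Analysis.Analysis"
begin

(* Character lattice X^*(T) = Z^n (as int^'n), cocharacter lattice X_*(T) = Z^n,
   standard pairing; V = X^*(T) (x) R = real^'n. *)

definition rvec :: "int ^ 'n \<Rightarrow> real ^ 'n" where
  "rvec v = (\<chi> i. of_int (v $ i))"

definition lattice :: "(real ^ 'n) set" where
  "lattice = range rvec"

definition pairing :: "real ^ 'n \<Rightarrow> int ^ 'n \<Rightarrow> real" where
  "pairing x c = x \<bullet> rvec c"

definition refl :: "int ^ 'n \<Rightarrow> int ^ 'n \<Rightarrow> real ^ 'n \<Rightarrow> real ^ 'n" where
  "refl a c x = x - pairing x c *\<^sub>R rvec a"

definition corefl :: "int ^ 'n \<Rightarrow> int ^ 'n \<Rightarrow> real ^ 'n \<Rightarrow> real ^ 'n" where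
  "corefl a c y = y - (rvec a \<bullet> y) *\<^sub>R rvec c"

(* reduced root datum (X, Phi, X^vee, Phi^vee) with X = X^vee = Z^n, roots R, coroot map cr *)
definition reduced_root_datum :: "(int ^ 'n) set \<Rightarrow> (int ^ 'n \<Rightarrow> int ^ 'n) \<Rightarrow> bool" where
  "reduced_root_datum R cr \<longleftrightarrow>
     finite R \<and> inj_on cr R \<and>
     (\<forall>a\<in>R. pairing (rvec a) (cr a) = 2) \<and>
     (\<forall>a\<in>R. refl a (cr a) ` (rvec ` R) = rvec ` R) \<and>
     (\<forall>a\<in>R. corefl a (cr a) ` (rvec ` cr ` R) = rvec ` cr ` R) \<and>
     (\<forall>a\<in>R. 2 *\<^sub>R rvec a \<notin> rvec ` R)"

(* positive system determined by a Borel subgroup containing T, i.e. by a regular cocharacter *)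
definition pos_system :: "(int ^ 'n) set \<Rightarrow> (int ^ 'n) set \<Rightarrow> bool" where
  "pos_system R P \<longleftrightarrow> (\<exists>v :: int ^ 'n. (\<forall>a\<in>R. pairing (rvec a) v \<noteq> 0) \<and>
                          P = {a\<in>R. pairing (rvec a) v > 0})"

(* root system of a Levi subgroup containing T: the roots in a subspace *)
definition levi_roots :: "(int ^ 'n) set \<Rightarrow> (int ^ 'n) set \<Rightarrow> bool" where
  "levi_roots R RM \<longleftrightarrow> RM \<subseteq> R \<and> (\<forall>b\<in>R. rvec b \<in> span (rvec ` RM) \<longrightarrow> b \<in> RM)"

inductive_set weyl :: "(int ^ 'n) set \<Rightarrow> (int ^ 'n \<Rightarrow> int ^ 'n)
                        \<Rightarrow> (real ^ 'n \<Rightarrow> real ^ 'n) set"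
  for S cr where
  weyl_id: "id \<in> weyl S cr"
| weyl_step: "w \<in> weyl S cr \<Longrightarrow> a \<in> S \<Longrightarrow> refl a (cr a) \<circ> w \<in> weyl S cr"

definition finlen :: "(int ^ 'n) set \<Rightarrow> (real ^ 'n \<Rightarrow> real ^ 'n) \<Rightarrow> nat" where
  "finlen P w = card {a\<in>P. \<exists>b\<in>P. w (rvec a) = - rvec b}"

definition simple_roots :: "(int ^ 'n) set \<Rightarrow> (int ^ 'n) set" where
  "simple_roots P = {a\<in>P. \<not> (\<exists>b\<in>P. \<exists>c\<in>P. a = b + c)}"

definition WM_set :: "(int ^ 'n) set \<Rightarrow> (int ^ 'n) set \<Rightarrow> (int ^ 'n) set
                      \<Rightarrow> (int ^ 'n \<Rightarrow> int ^ 'n) \<Rightarrow> (real ^ 'n \<Rightarrow> real ^ 'n) set" where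
  "WM_set R RM P cr = {w\<in>weyl R cr. \<forall>a\<in>simple_roots (P \<inter> RM).
                           finlen P (refl a (cr a) \<circ> w) > finlen P w}"

(* extended affine Weyl group X^* \<rtimes> W: pairs (lambda, w) = t_lambda w *)
type_synonym ('n) ewel = "(real ^ ('n::finite)) \<times> (real ^ 'n \<Rightarrow> real ^ 'n)"

definition ext_weyl :: "(int ^ 'n) set \<Rightarrow> (int ^ 'n \<Rightarrow> int ^ 'n) \<Rightarrow> ('n::finite) ewel set" where
  "ext_weyl S cr = lattice \<times> weyl S cr"

definition emult :: "('n::finite) ewel \<Rightarrow> ('n::finite) ewel \<Rightarrow> ('n::finite) ewel" where
  "emult x y = (fst x + snd x (fst y), snd x \<circ> snd y)"

definition eact :: "('n::finite) ewel \<Rightarrow> real ^ 'n \<Rightarrow> real ^ 'n" where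
  "eact x v = fst x + snd x v"

(* affine reflection s_{a,k}: v \<mapsto> v - (<v,a^vee> - k) a, i.e. t_{k a} s_a *)
definition affrefl :: "(int ^ 'n \<Rightarrow> int ^ 'n) \<Rightarrow> int ^ 'n \<Rightarrow> int \<Rightarrow> ('n::finite) ewel" where
  "affrefl cr a k = (of_int k *\<^sub>R rvec a, refl a (cr a))"

definition base_alcove :: "(int ^ 'n) set \<Rightarrow> (int ^ 'n \<Rightarrow> int ^ 'n) \<Rightarrow> (real ^ 'n) set" where
  "base_alcove P cr = {v. \<forall>a\<in>P. 0 < pairing v (cr a) \<and> pairing v (cr a) < 1}"

definition separates :: "int ^ 'n \<Rightarrow> int \<Rightarrow> (real ^ 'n) set \<Rightarrow> (real ^ 'n) set \<Rightarrow> bool" where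
  "separates c k A B \<longleftrightarrow>
     (\<forall>p\<in>A. \<forall>q\<in>B. (pairing p c - of_int k) * (pairing q c - of_int k) < 0)"

definition afflen :: "(int ^ 'n) set \<Rightarrow> (int ^ 'n \<Rightarrow> int ^ 'n) \<Rightarrow> ('n::finite) ewel \<Rightarrow> nat" where
  "afflen P cr x = card {(a, k). a \<in> P \<and>
       separates (cr a) k (base_alcove P cr) (eact x ` base_alcove P cr)}"

definition bruhat_step :: "(int ^ 'n) set \<Rightarrow> (int ^ 'n \<Rightarrow> int ^ 'n) \<Rightarrow> (('n::finite) ewel \<times> ('n::finite) ewel) set" where
  "bruhat_step P cr = {(x, emult (affrefl cr a k) x) | x a k.
       a \<in> P \<and> afflen P cr x < afflen P cr (emult (affrefl cr a k) x)}"

definition bruhat_le :: "(int ^ 'n) set \<Rightarrow> (int ^ 'n \<Rightarrow> int ^ 'n) \<Rightarrow> ('n::finite) ewel \<Rightarrow> ('n::finite) ewel \<Rightarrow> bool" where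
  "bruhat_le P cr x y \<longleftrightarrow> (x, y) \<in> (bruhat_step P cr)\<^sup>*"

definition Adm :: "(int ^ 'n) set \<Rightarrow> (int ^ 'n) set \<Rightarrow> (int ^ 'n \<Rightarrow> int ^ 'n)
                   \<Rightarrow> int ^ 'n \<Rightarrow> ('n::finite) ewel set" where
  "Adm S Q cr lam = {x \<in> ext_weyl S cr.
       \<exists>w\<in>weyl S cr. bruhat_le Q cr x (w (rvec lam), id)}"

end

theory Submission
  imports Defs
begin


definition sepset :: "'i set \<Rightarrow> ('i \<Rightarrow> 'v \<Rightarrow> real) \<Rightarrow> 'v set \<Rightarrow> 'v set \<Rightarrow> 'i set" where
  "sepset I g X Y = {i\<in>I. \<forall>p\<in>X. \<forall>q\<in>Y. g i p * g i q < 0}"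

definition regular :: "'i set \<Rightarrow> ('i \<Rightarrow> 'v \<Rightarrow> real) \<Rightarrow> 'v set \<Rightarrow> bool" where
  "regular I g X \<longleftrightarrow> (\<forall>i\<in>I. \<forall>p\<in>X. \<forall>p'\<in>X. g i p * g i p' > 0)"

lemma sign_tr: "x*y > 0 \<Longrightarrow> z*w > 0 \<Longrightarrow> y*w < 0 \<Longrightarrow> x*z < (0::real)"
  by (auto simp: zero_less_mult_iff mult_less_0_iff)

lemma sign_tr2: "x*y < 0 \<Longrightarrow> x*z > 0 \<Longrightarrow> w*y < 0 \<Longrightarrow> w*z > (0::real)"
  by (auto simp: zero_less_mult_iff mult_less_0_iff)

lemma aux1: "X*Y < 0 \<Longrightarrow> X*Z > 0 \<Longrightarrow> Z = Y - G*c \<Longrightarrow> F*G > 0 \<Longrightarrow> (X - F*c) * Y < (0::real)"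
proof -
  assume a: "X*Y < 0" "X*Z > 0" "Z = Y - G*c" "F*G > 0"
  show ?thesis
  proof (cases "Y > 0")
    case True
    then have "X < 0" using a(1) by (auto simp: mult_less_0_iff)
    then have "Z < 0" using a(2) by (auto simp: zero_less_mult_iff)
    then have gc: "G*c > 0" using a(3) True by linarith
    have "F*c > 0"
    proof (cases "G > 0")
      case True
      then show ?thesis using gc a(4) by (auto simp: zero_less_mult_iff)
    next
      case False
      then show ?thesis using gc a(4) by (auto simp: zero_less_mult_iff)
    qed
    then have "X - F*c < 0" using \<open>X < 0\<close> by linarith
    then show ?thesis using True by (simp add: mult_neg_pos)
  next
    case False
    then have Y: "Y < 0" using a(1) by (cases "Y = 0") auto
    then have "X > 0" using a(1) by (auto simp: mult_less_0_iff)
    then have "Z > 0" using a(2) by (auto simp: zero_less_mult_iff)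
    then have gc: "G*c < 0" using a(3) Y by linarith
    have "F*c < 0"
    proof (cases "G > 0")
      case True
      then show ?thesis using gc a(4) by (auto simp: zero_less_mult_iff mult_less_0_iff)
    next
      case False
      then show ?thesis using gc a(4) by (auto simp: zero_less_mult_iff mult_less_0_iff)
    qed
    then have "X - F*c > 0" using \<open>X > 0\<close> by linarith
    then show ?thesis using Y by (simp add: mult_pos_neg)
  qed
qed

lemma regular_nz: "regular I g X \<Longrightarrow> i \<in> I \<Longrightarrow> p \<in> X \<Longrightarrow> g i p \<noteq> 0"
  unfolding regular_def by fastforce

lemma sep_char:
  assumes "regular I g A" "regular I g Y" "p \<in> A" "y \<in> Y" "i \<in> I"
  shows "i \<in> sepset I g A Y \<longleftrightarrow> g i p * g i y < 0"
proof
  assume "i \<in> sepset I g A Y" then show "g i p * g i y < 0" using assms unfolding sepset_def by auto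
next
  assume h: "g i p * g i y < 0"
  have "\<forall>p'\<in>A. \<forall>q'\<in>Y. g i p' * g i q' < 0"
  proof (intro ballI)
    fix p' q' assume "p' \<in> A" "q' \<in> Y"
    have "g i p' * g i p > 0" using assms \<open>p' \<in> A\<close> unfolding regular_def by auto
    moreover have "g i q' * g i y > 0" using assms \<open>q' \<in> Y\<close> unfolding regular_def by auto
    ultimately show "g i p' * g i q' < 0" using h sign_tr by blast
  qed
  then show "i \<in> sepset I g A Y" using assms unfolding sepset_def by auto
qed

lemma AL:
  fixes g :: "'i \<Rightarrow> 'v \<Rightarrow> real" and r :: "'v \<Rightarrow> 'v"
  assumes rr: "\<And>v. r (r v) = v"
  and hz: "hz \<in> I"
  and sig: "\<And>i. i\<in>I \<Longrightarrow> \<exists>j\<in>I. \<exists>e. (e = 1 \<or> e = -1) \<and> (\<forall>v. g j (r v) = e * g i v)"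
  and uniq: "\<And>i j e. i\<in>I \<Longrightarrow> j\<in>I \<Longrightarrow> (e = 1 \<or> e = -1) \<Longrightarrow> (\<forall>v. g i v = e * g j v) \<Longrightarrow> i = j"
  and aff: "\<And>i. i\<in>I \<Longrightarrow> \<exists>c. \<forall>v. g i (r v) = g i v - g hz v * c"
  and flip: "\<And>v. g hz (r v) = - g hz v"
  and regA: "regular I g A" and regC: "regular I g C" and regrC: "regular I g (r ` C)"
  and neA: "A \<noteq> {}" and neC: "C \<noteq> {}"
  and same: "\<forall>p\<in>A. \<forall>q\<in>C. g hz p * g hz q > 0"
  and fin: "finite (sepset I g A (r ` C))"
  shows "card (sepset I g A C) < card (sepset I g A (r ` C))"
proof -
  obtain p where p: "p \<in> A" using neA by auto
  obtain q where q: "q \<in> C" using neC by auto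
  have rq: "r q \<in> r ` C" using q by auto
  define SC where "SC = sepset I g A C"
  define SR where "SR = sepset I g A (r ` C)"
  have cC: "\<And>i. i \<in> I \<Longrightarrow> i \<in> SC \<longleftrightarrow> g i p * g i q < 0"
    unfolding SC_def using sep_char[OF regA regC p q] by blast
  have cR: "\<And>i. i \<in> I \<Longrightarrow> i \<in> SR \<longleftrightarrow> g i p * g i (r q) < 0"
    unfolding SR_def using sep_char[OF regA regrC p rq] by blast
  have SCI: "SC \<subseteq> I" unfolding SC_def sepset_def by auto
  have SRI: "SR \<subseteq> I" unfolding SR_def sepset_def by auto
  have hzR: "hz \<in> SR" using cR[OF hz] flip same p q
    by (metis mult_minus_right neg_less_0_iff_less)
  have "g hz p * g hz q > 0" using same p q by blast
  then have hzC: "hz \<notin> SC" using cC[OF hz] by auto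
  define \<sigma> where "\<sigma> i = (SOME j. j\<in>I \<and> (\<exists>e. (e = 1 \<or> e = -1) \<and> (\<forall>v. g j (r v) = e * g i v)))" for i
  have \<sigma>: "\<And>i. i \<in> I \<Longrightarrow> \<sigma> i \<in> I \<and> (\<exists>e. (e = 1 \<or> e = -1) \<and> (\<forall>v. g (\<sigma> i) (r v) = e * g i v))"
  proof -
    fix i assume "i \<in> I"
    from sig[OF this] have "\<exists>j. j\<in>I \<and> (\<exists>e. (e = 1 \<or> e = -1) \<and> (\<forall>v. g j (r v) = e * g i v))" by blast
    then show "\<sigma> i \<in> I \<and> (\<exists>e. (e = 1 \<or> e = -1) \<and> (\<forall>v. g (\<sigma> i) (r v) = e * g i v))"
      unfolding \<sigma>_def by (rule someI_ex)
  qed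
  have nzp: "\<And>i. i \<in> I \<Longrightarrow> g i p \<noteq> 0" using regular_nz[OF regA] p by blast
  have nzrq: "\<And>i. i \<in> I \<Longrightarrow> g i (r q) \<noteq> 0" using regular_nz[OF regrC] rq by blast
  have case2: "\<And>i. i \<in> SC \<Longrightarrow> i \<notin> SR \<Longrightarrow> g i p * g i q < 0 \<and> g i p * g i (r q) > 0 \<and> g i (r p) * g i q < 0"
  proof -
    fix i assume i: "i \<in> SC" "i \<notin> SR"
    have iI: "i \<in> I" using i SCI by auto
    have h1: "g i p * g i q < 0" using cC iI i by auto
    have "\<not> g i p * g i (r q) < 0" using cR iI i by auto
    moreover have "g i p * g i (r q) \<noteq> 0" using nzp nzrq iI by auto
    ultimately have h2: "g i p * g i (r q) > 0" by linarith
    obtain c where c: "\<And>v. g i (r v) = g i v - g hz v * c" using aff[OF iI] by blast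
    have "(g i p - g hz p * c) * g i q < 0"
      by (rule aux1[OF h1 h2 c[of q]]) (use same p q in auto)
    then have h3: "g i (r p) * g i q < 0" using c[of p] by simp
    show "g i p * g i q < 0 \<and> g i p * g i (r q) > 0 \<and> g i (r p) * g i q < 0" using h1 h2 h3 by auto
  qed
  define \<phi> where "\<phi> i = (if i \<in> SR then i else \<sigma> i)" for i
  have img: "\<phi> ` SC \<subseteq> SR - {hz}"
  proof
    fix x assume "x \<in> \<phi> ` SC"
    then obtain i where i: "i \<in> SC" "x = \<phi> i" by auto
    have iI: "i \<in> I" using i SCI by auto
    show "x \<in> SR - {hz}"
    proof (cases "i \<in> SR")
      case True
      then show ?thesis using i hzC unfolding \<phi>_def by auto
    next
      case False
      have x: "x = \<sigma> i" using i False unfolding \<phi>_def by auto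
      obtain e where e: "e = 1 \<or> e = -1" "\<And>v. g (\<sigma> i) (r v) = e * g i v" using \<sigma>[OF iI] by blast
      have jI: "\<sigma> i \<in> I" using \<sigma>[OF iI] by blast
      have c2: "g i (r p) * g i q < 0" using case2[OF i(1) False] by blast
      have "g (\<sigma> i) p * g (\<sigma> i) (r q) = (e * e) * (g i (r p) * g i q)"
        using e(2)[of "r p"] e(2)[of q] rr[of p] by (simp add: algebra_simps)
      also have "e * e = 1" using e(1) by auto
      finally have "g (\<sigma> i) p * g (\<sigma> i) (r q) < 0" using c2 by simp
      then have inR: "\<sigma> i \<in> SR" using cR[OF jI] by simp
      have "\<sigma> i \<noteq> hz"
      proof
        assume h: "\<sigma> i = hz"
        have "\<forall>v. g i v = (- e) * g hz v"
        proof
          fix v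
          have "g hz (r v) = e * g i v" using e(2) h by simp
          then have "- g hz v = e * g i v" using flip by simp
          then show "g i v = (- e) * g hz v" using e(1) by auto
        qed
        then have "i = hz" using uniq[OF iI hz, of "-e"] e(1) by auto
        then show False using i(1) hzC by simp
      qed
      then show ?thesis using x inR by auto
    qed
  qed
  have inj: "inj_on \<phi> SC"
  proof
    fix i1 i2 assume i1: "i1 \<in> SC" and i2: "i2 \<in> SC" and eq: "\<phi> i1 = \<phi> i2"
    have i1I: "i1 \<in> I" and i2I: "i2 \<in> I" using i1 i2 SCI by auto
    have mixed: False if a: "j1 \<in> SC" "j2 \<in> SC" "j1 \<in> SR" "j2 \<notin> SR" "j1 = \<sigma> j2" for j1 j2
    proof -
      have j2I: "j2 \<in> I" using a SCI by auto
      have j1I: "j1 \<in> I" using a SCI by auto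
      obtain e where e: "e = 1 \<or> e = -1" "\<And>v. g (\<sigma> j2) (r v) = e * g j2 v" using \<sigma>[OF j2I] by blast
      have c2: "g j2 p * g j2 q < 0" "g j2 p * g j2 (r q) > 0" "g j2 (r p) * g j2 q < 0"
        using case2[OF a(2) a(4)] by auto
      have "g j1 p * g j1 q < 0" using cC j1I a(1) by auto
      moreover have "g j1 p * g j1 q = (e*e) * (g j2 (r p) * g j2 (r q))"
        using e(2)[of "r p"] e(2)[of "r q"] rr[of p] rr[of q] a(5) by (simp add: algebra_simps)
      moreover have "e * e = 1" using e(1) by auto
      ultimately have "g j2 (r p) * g j2 (r q) < 0" by simp
      moreover have "g j2 (r p) * g j2 (r q) > 0" using sign_tr2[OF c2(1) c2(2) c2(3)] .
      ultimately show False by simp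
    qed
    show "i1 = i2"
    proof (cases "i1 \<in> SR"; cases "i2 \<in> SR")
      assume "i1 \<in> SR" "i2 \<in> SR" then show ?thesis using eq unfolding \<phi>_def by auto
    next
      assume a: "i1 \<in> SR" "i2 \<notin> SR"
      then have "i1 = \<sigma> i2" using eq unfolding \<phi>_def by simp
      then show ?thesis using mixed[OF i1 i2 a] by blast
    next
      assume a: "i1 \<notin> SR" "i2 \<in> SR"
      then have "i2 = \<sigma> i1" using eq unfolding \<phi>_def by simp
      then show ?thesis using mixed[OF i2 i1 a(2) a(1)] by blast
    next
      assume n: "i1 \<notin> SR" "i2 \<notin> SR"
      then have s: "\<sigma> i1 = \<sigma> i2" using eq unfolding \<phi>_def by auto
      obtain e1 where e1: "e1 = 1 \<or> e1 = -1" "\<And>v. g (\<sigma> i1) (r v) = e1 * g i1 v" using \<sigma>[OF i1I] by blast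
      obtain e2 where e2: "e2 = 1 \<or> e2 = -1" "\<And>v. g (\<sigma> i2) (r v) = e2 * g i2 v" using \<sigma>[OF i2I] by blast
      have "\<forall>v. g i1 v = (e1 * e2) * g i2 v"
      proof
        fix v
        have "e1 * g i1 v = e2 * g i2 v" using e1(2)[of v] e2(2)[of v] s by simp
        then have "e1 * (e1 * g i1 v) = e1 * (e2 * g i2 v)" by simp
        then show "g i1 v = (e1 * e2) * g i2 v" using e1(1) by (auto simp: algebra_simps)
      qed
      moreover have "e1 * e2 = 1 \<or> e1 * e2 = -1" using e1(1) e2(1) by auto
      ultimately show ?thesis using uniq[OF i1I i2I] by blast
    qed
  qed
  have "card SC = card (\<phi> ` SC)" using card_image[OF inj] by simp
  also have "\<dots> \<le> card (SR - {hz})"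
    using img fin unfolding SR_def by (intro card_mono) auto
  also have "\<dots> < card SR" using card_Diff1_less[of SR hz] hzR fin unfolding SR_def by blast
  finally show ?thesis unfolding SC_def SR_def .
qed




lemma rvec_add: "rvec (a + b) = rvec a + rvec b"
  by (simp add: rvec_def vec_eq_iff)
lemma rvec_minus: "rvec (- a) = - rvec a"
  by (simp add: rvec_def vec_eq_iff)
lemma rvec_diff: "rvec (a - b) = rvec a - rvec b"
  by (simp add: rvec_def vec_eq_iff)
lemma rvec_zero: "rvec 0 = 0"
  by (simp add: rvec_def vec_eq_iff)
lemma rvec_smult: "rvec (k *s a) = of_int k *\<^sub>R rvec a"
  by (simp add: rvec_def vec_eq_iff)
lemma rvec_inj: "inj rvec"
  by (auto simp: inj_def rvec_def vec_eq_iff)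
lemma rvec_eq_iff: "rvec a = rvec b \<longleftrightarrow> a = b"
  using rvec_inj by (auto simp: inj_def)
lemma rvec_inner_int: "rvec a \<bullet> rvec b = of_int (\<Sum>i\<in>UNIV. a$i * b$i)"
  by (simp add: rvec_def inner_vec_def)

lemma refl_linear: "linear (refl a c)"
  unfolding refl_def pairing_def
  by (rule linearI) (auto simp: algebra_simps inner_add_left)
lemma corefl_linear: "linear (corefl a c)"
  unfolding corefl_def
  by (rule linearI) (auto simp: algebra_simps inner_add_right)

lemma refl_adj: "refl a c x \<bullet> y = x \<bullet> corefl a c y"
  unfolding refl_def corefl_def pairing_def
  by (simp add: algebra_simps inner_diff_left inner_diff_right)

lemma refl_refl: "pairing (rvec a) c = 2 \<Longrightarrow> refl a c (refl a c x) = x"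
  unfolding refl_def pairing_def
  by (simp add: algebra_simps inner_diff_left)
lemma corefl_corefl: "pairing (rvec a) c = 2 \<Longrightarrow> corefl a c (corefl a c x) = x"
  unfolding corefl_def pairing_def
  by (simp add: algebra_simps inner_diff_right)
lemma refl_self: "pairing (rvec a) c = 2 \<Longrightarrow> refl a c (rvec a) = - rvec a"
  unfolding refl_def pairing_def by (simp add: scaleR_2)
lemma corefl_self: "pairing (rvec a) c = 2 \<Longrightarrow> corefl a c (rvec c) = - rvec c"
  unfolding corefl_def pairing_def by (simp add: scaleR_2 inner_commute)

lemma rd_fin: "reduced_root_datum R cr \<Longrightarrow> finite R"
  unfolding reduced_root_datum_def by auto
lemma rd_inj: "reduced_root_datum R cr \<Longrightarrow> inj_on cr R"
  unfolding reduced_root_datum_def by auto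
lemma rd_two: "reduced_root_datum R cr \<Longrightarrow> a \<in> R \<Longrightarrow> pairing (rvec a) (cr a) = 2"
  unfolding reduced_root_datum_def by auto
lemma rd_two': "reduced_root_datum R cr \<Longrightarrow> a \<in> R \<Longrightarrow> rvec a \<bullet> rvec (cr a) = 2"
  using rd_two unfolding pairing_def by blast
lemma rd_refl_img: "reduced_root_datum R cr \<Longrightarrow> c \<in> R \<Longrightarrow> refl c (cr c) ` (rvec ` R) = rvec ` R"
  unfolding reduced_root_datum_def by auto
lemma rd_corefl_img: "reduced_root_datum R cr \<Longrightarrow> c \<in> R \<Longrightarrow> corefl c (cr c) ` (rvec ` cr ` R) = rvec ` cr ` R"
  unfolding reduced_root_datum_def by auto

lemma rd_refl_ex:
  assumes "reduced_root_datum R cr" "a \<in> R" "c \<in> R"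
  shows "\<exists>b\<in>R. rvec b = refl c (cr c) (rvec a)"
proof -
  have "refl c (cr c) (rvec a) \<in> rvec ` R" using rd_refl_img[OF assms(1,3)] assms(2) by blast
  then show ?thesis by auto
qed

lemma rd_corefl_mem:
  assumes "reduced_root_datum R cr" "y \<in> rvec ` cr ` R" "c \<in> R"
  shows "corefl c (cr c) y \<in> rvec ` cr ` R"
  using rd_corefl_img[OF assms(1,3)] assms(2) by blast

lemma rd_neg: assumes "reduced_root_datum R cr" "a \<in> R" shows "- a \<in> R"
proof -
  obtain b where "b \<in> R" "rvec b = refl a (cr a) (rvec a)" using rd_refl_ex[OF assms(1,2,2)] by blast
  then have "rvec b = rvec (-a)" using refl_self[OF rd_two[OF assms]] by (simp add: rvec_minus)
  then show ?thesis using \<open>b \<in> R\<close> rvec_eq_iff by metis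
qed

lemma coroot_unique:
  fixes \<beta> \<gamma> \<gamma>' :: "real ^ 'n"
  assumes fin: "finite X" and g: "\<gamma> \<in> X" and g': "\<gamma>' \<in> X"
    and b: "\<beta> \<bullet> \<gamma> = 2" and b': "\<beta> \<bullet> \<gamma>' = 2"
    and T: "\<forall>y\<in>X. y - (\<beta> \<bullet> y) *\<^sub>R \<gamma> \<in> X" and T': "\<forall>y\<in>X. y - (\<beta> \<bullet> y) *\<^sub>R \<gamma>' \<in> X"
  shows "\<gamma> = \<gamma>'"
proof (rule ccontr)
  assume ne: "\<gamma> \<noteq> \<gamma>'"
  define d where "d = \<gamma> - \<gamma>'"
  have bd: "\<beta> \<bullet> d = 0" using b b' by (simp add: d_def inner_diff_right)
  have mem: "\<gamma> + (2 * real m) *\<^sub>R d \<in> X" for m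
  proof (induction m)
    case 0 then show ?case using g by simp
  next
    case (Suc m)
    define z where "z = \<gamma> + (2 * real m) *\<^sub>R d"
    have bz: "\<beta> \<bullet> z = 2" using b bd by (simp add: z_def inner_add_right)
    have z1: "z - (\<beta> \<bullet> z) *\<^sub>R \<gamma>' \<in> X" using T' Suc z_def by blast
    have bz1: "\<beta> \<bullet> (z - (\<beta> \<bullet> z) *\<^sub>R \<gamma>') = -2" using bz b' by (simp add: inner_diff_right)
    have "(z - (\<beta> \<bullet> z) *\<^sub>R \<gamma>') - (\<beta> \<bullet> (z - (\<beta> \<bullet> z) *\<^sub>R \<gamma>')) *\<^sub>R \<gamma> \<in> X" using T z1 by blast
    also have "(z - (\<beta> \<bullet> z) *\<^sub>R \<gamma>') - (\<beta> \<bullet> (z - (\<beta> \<bullet> z) *\<^sub>R \<gamma>')) *\<^sub>R \<gamma> = z + 2 *\<^sub>R d"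
      by (simp only: bz1) (simp add: bz d_def scaleR_right_diff_distrib)
    also have "z + 2 *\<^sub>R d = \<gamma> + (2 * real (Suc m)) *\<^sub>R d"
      unfolding z_def by (simp add: algebra_simps)
    finally show ?case .
  qed
  have "d \<noteq> 0" using ne d_def by simp
  then have "inj (\<lambda>m::nat. \<gamma> + (2 * real m) *\<^sub>R d)"
    by (auto simp: inj_def)
  moreover have "range (\<lambda>m::nat. \<gamma> + (2 * real m) *\<^sub>R d) \<subseteq> X" using mem by auto
  ultimately have "infinite X"
    using finite_imageD infinite_UNIV_nat finite_subset by metis
  then show False using fin by simp
qed

lemma coroot_refl:
  assumes rd: "reduced_root_datum R cr" and b0: "b0 \<in> R" and c: "c \<in> R" and b: "b \<in> R"
    and eq: "rvec b = refl c (cr c) (rvec b0)"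
  shows "rvec (cr b) = corefl c (cr c) (rvec (cr b0))"
proof (rule coroot_unique[where X = "rvec ` cr ` R" and \<beta> = "rvec b"])
  show "finite (rvec ` cr ` R)" using rd_fin[OF rd] by simp
  show "rvec (cr b) \<in> rvec ` cr ` R" using b by simp
  show "corefl c (cr c) (rvec (cr b0)) \<in> rvec ` cr ` R" using rd_corefl_mem[OF rd _ c] b0 by simp
  show "rvec b \<bullet> rvec (cr b) = 2" using rd_two'[OF rd b] .
  have two_c: "pairing (rvec c) (cr c) = 2" using rd_two[OF rd c] .
  show "rvec b \<bullet> corefl c (cr c) (rvec (cr b0)) = 2"
    unfolding eq refl_adj corefl_corefl[OF two_c] using rd_two'[OF rd b0] .
  show "\<forall>y\<in>rvec ` cr ` R. y - (rvec b \<bullet> y) *\<^sub>R rvec (cr b) \<in> rvec ` cr ` R"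
    using rd_corefl_mem[OF rd _ b] unfolding corefl_def by blast
  show "\<forall>y\<in>rvec ` cr ` R. y - (rvec b \<bullet> y) *\<^sub>R corefl c (cr c) (rvec (cr b0)) \<in> rvec ` cr ` R"
  proof
    fix y assume y: "y \<in> rvec ` cr ` R"
    have lin: "linear (corefl c (cr c))" by (rule corefl_linear)
    have "corefl c (cr c) (corefl b0 (cr b0) (corefl c (cr c) y))
        = corefl c (cr c) (corefl c (cr c) y) - (rvec b0 \<bullet> corefl c (cr c) y) *\<^sub>R corefl c (cr c) (rvec (cr b0))"
      unfolding corefl_def[of b0] using linear_diff[OF lin] linear_cmul[OF lin] by simp
    also have "\<dots> = y - (rvec b \<bullet> y) *\<^sub>R corefl c (cr c) (rvec (cr b0))"
      unfolding eq refl_adj corefl_corefl[OF two_c] by simp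
    finally have e: "y - (rvec b \<bullet> y) *\<^sub>R corefl c (cr c) (rvec (cr b0)) = corefl c (cr c) (corefl b0 (cr b0) (corefl c (cr c) y))" by simp
    show "y - (rvec b \<bullet> y) *\<^sub>R corefl c (cr c) (rvec (cr b0)) \<in> rvec ` cr ` R"
      unfolding e by (intro rd_corefl_mem[OF rd _ c] rd_corefl_mem[OF rd _ b0] rd_corefl_mem[OF rd y c])
  qed
qed

lemma cr_neg:
  assumes rd: "reduced_root_datum R cr" and a: "a \<in> R"
  shows "cr (- a) = - cr a"
proof -
  have two: "pairing (rvec a) (cr a) = 2" using rd_two[OF rd a] .
  have "rvec (-a) = refl a (cr a) (rvec a)" using refl_self[OF two] by (simp add: rvec_minus)
  then have "rvec (cr (-a)) = corefl a (cr a) (rvec (cr a))"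
    using coroot_refl[OF rd a a rd_neg[OF rd a]] by simp
  also have "\<dots> = rvec (- cr a)" using corefl_self[OF two] by (simp add: rvec_minus)
  finally show ?thesis using rvec_eq_iff by blast
qed




lemma weyl_linear: "w \<in> weyl S cr \<Longrightarrow> linear w"
  by (induction rule: weyl.induct) (metis linear_id, metis linear_compose refl_linear)

lemma weyl_comp: "w1 \<in> weyl S cr \<Longrightarrow> w2 \<in> weyl S cr \<Longrightarrow> w1 \<circ> w2 \<in> weyl S cr"
proof (induction rule: weyl.induct)
  case weyl_id then show ?case by simp
next
  case (weyl_step w a)
  then have "refl a (cr a) \<circ> (w \<circ> w2) \<in> weyl S cr" by (intro weyl.weyl_step) auto
  then show ?case by (simp only: comp_assoc)
qed

lemma weyl_refl: "a \<in> S \<Longrightarrow> refl a (cr a) \<in> weyl S cr"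
  using weyl.weyl_step[OF weyl.weyl_id] by fastforce

lemma weyl_mono: "w \<in> weyl S cr \<Longrightarrow> S \<subseteq> T \<Longrightarrow> w \<in> weyl T cr"
  by (induction rule: weyl.induct) (auto intro: weyl.intros)

lemma weyl_inv:
  assumes rd: "reduced_root_datum R cr" and SR: "S \<subseteq> R" and w: "w \<in> weyl S cr"
  shows "\<exists>w'\<in>weyl S cr. w' \<circ> w = id \<and> w \<circ> w' = id"
  using w
proof (induction rule: weyl.induct)
  case weyl_id then show ?case using weyl.weyl_id[of S cr] by (metis comp_id)
next
  case (weyl_step w a)
  then obtain w' where w': "w' \<in> weyl S cr" "w' \<circ> w = id" "w \<circ> w' = id" by blast
  have two: "pairing (rvec a) (cr a) = 2" using rd_two[OF rd] SR weyl_step by auto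
  have ss: "refl a (cr a) \<circ> refl a (cr a) = id" using refl_refl[OF two] by (auto simp: fun_eq_iff)
  have "w' \<circ> refl a (cr a) \<in> weyl S cr" using weyl_comp[OF w'(1) weyl_refl] weyl_step by auto
  moreover have "(w' \<circ> refl a (cr a)) \<circ> (refl a (cr a) \<circ> w) = id"
    using ss w'(2) by (simp add: comp_assoc) (metis comp_assoc comp_id)
  moreover have "(refl a (cr a) \<circ> w) \<circ> (w' \<circ> refl a (cr a)) = id"
    using ss w'(3) by (simp add: comp_assoc) (metis comp_assoc comp_id)
  ultimately show ?case by blast
qed

lemma lattice_refl:
  assumes "x \<in> lattice" shows "refl a c x \<in> lattice"
proof -
  obtain m where m: "x = rvec m" using assms unfolding lattice_def by auto
  define N where "N = (\<Sum>i\<in>UNIV. m$i * c$i)"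
  have "refl a c x = rvec (m - N *s a)"
    unfolding refl_def pairing_def m rvec_diff rvec_smult rvec_inner_int N_def by simp
  then show ?thesis unfolding lattice_def by simp
qed

lemma lattice_add: "x \<in> lattice \<Longrightarrow> y \<in> lattice \<Longrightarrow> x + y \<in> lattice"
proof -
  assume "x \<in> lattice" "y \<in> lattice"
  then obtain a b where "x = rvec a" "y = rvec b" unfolding lattice_def by auto
  then have "x + y = rvec (a + b)" by (simp add: rvec_add)
  then show ?thesis unfolding lattice_def by simp
qed

lemma lattice_smult: "x \<in> lattice \<Longrightarrow> of_int k *\<^sub>R x \<in> lattice"
proof -
  assume "x \<in> lattice"
  then obtain a where "x = rvec a" unfolding lattice_def by auto
  then have "of_int k *\<^sub>R x = rvec (k *s a)" by (simp add: rvec_smult)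
  then show ?thesis unfolding lattice_def by simp
qed

lemma lattice_zero: "0 \<in> lattice"
proof -
  have "(0::real^'a) = rvec 0" by (simp add: rvec_zero)
  then show ?thesis unfolding lattice_def by (metis rangeI)
qed

lemma lattice_rvec: "rvec a \<in> lattice"
  unfolding lattice_def by simp

lemma weyl_lattice: "w \<in> weyl S cr \<Longrightarrow> x \<in> lattice \<Longrightarrow> w x \<in> lattice"
  by (induction arbitrary: x rule: weyl.induct) (auto intro: lattice_refl)

lemma lattice_inner_int: "x \<in> lattice \<Longrightarrow> \<exists>N::int. x \<bullet> rvec c = of_int N"
  unfolding lattice_def using rvec_inner_int by blast

lemma rvec_inner_int': "\<exists>N::int. rvec a \<bullet> rvec c = of_int N"
  using rvec_inner_int by blast

definition closedR :: "(int ^ 'n) set \<Rightarrow> (int ^ 'n) set \<Rightarrow> (int ^ 'n \<Rightarrow> int ^ 'n) \<Rightarrow> bool" where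
  "closedR R S cr \<longleftrightarrow> S \<subseteq> R \<and> (\<forall>a\<in>S. \<forall>c\<in>S. \<forall>b\<in>R. rvec b = refl c (cr c) (rvec a) \<longrightarrow> b \<in> S)"

lemma closedR_R: "closedR R R cr" unfolding closedR_def by auto

lemma closedR_levi:
  assumes "levi_roots R RM" shows "closedR R RM cr"
  unfolding closedR_def
proof (intro conjI ballI impI)
  show "RM \<subseteq> R" using assms unfolding levi_roots_def by auto
next
  fix a c b assume a: "a \<in> RM" and c: "c \<in> RM" and b: "b \<in> R" and eq: "rvec b = refl c (cr c) (rvec a)"
  have "rvec b \<in> span (rvec ` RM)"
    unfolding eq refl_def using a c by (intro span_diff span_scale span_base) auto
  then show "b \<in> RM" using assms b unfolding levi_roots_def by auto
qed

lemma closedR_sub: "closedR R S cr \<Longrightarrow> S \<subseteq> R" unfolding closedR_def by auto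

lemma closedR_refl_ex:
  assumes rd: "reduced_root_datum R cr" and cl: "closedR R S cr" and a: "a \<in> S" and c: "c \<in> S"
  shows "\<exists>b\<in>S. rvec b = refl c (cr c) (rvec a)"
proof -
  have "a \<in> R" "c \<in> R" using a c closedR_sub[OF cl] by auto
  then obtain b where "b \<in> R" "rvec b = refl c (cr c) (rvec a)" using rd_refl_ex[OF rd] by blast
  then show ?thesis using cl a c unfolding closedR_def by blast
qed

lemma closedR_neg:
  assumes rd: "reduced_root_datum R cr" and cl: "closedR R S cr" and a: "a \<in> S"
  shows "- a \<in> S"
proof -
  have aR: "a \<in> R" using a closedR_sub[OF cl] by auto
  obtain b where b: "b \<in> S" "rvec b = refl a (cr a) (rvec a)" using closedR_refl_ex[OF rd cl a a] by blast
  then have "rvec b = rvec (-a)" using refl_self[OF rd_two[OF rd aR]] by (simp add: rvec_minus)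
  then show ?thesis using b rvec_eq_iff by metis
qed

lemma weyl_root:
  assumes rd: "reduced_root_datum R cr" and cl: "closedR R S cr"
    and w: "w \<in> weyl S cr" and a: "a \<in> S"
  shows "\<exists>b\<in>S. rvec b = w (rvec a) \<and> (\<forall>z. w z \<bullet> rvec (cr b) = z \<bullet> rvec (cr a))"
  using w
proof (induction rule: weyl.induct)
  case weyl_id then show ?case using a by auto
next
  case (weyl_step w c)
  have cS: "c \<in> S" by fact
  from weyl_step obtain b0 where b0: "b0 \<in> S" "rvec b0 = w (rvec a)" "\<forall>z. w z \<bullet> rvec (cr b0) = z \<bullet> rvec (cr a)" by blast
  obtain b where b: "b \<in> S" "rvec b = refl c (cr c) (rvec b0)" using closedR_refl_ex[OF rd cl b0(1) cS] by blast
  have SR: "S \<subseteq> R" using closedR_sub[OF cl] .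
  have cb: "rvec (cr b) = corefl c (cr c) (rvec (cr b0))"
    using coroot_refl[OF rd _ _ _ b(2)] b0(1) b(1) cS SR by auto
  have two: "pairing (rvec c) (cr c) = 2" using rd_two[OF rd] cS SR by auto
  have "\<forall>z. (refl c (cr c) \<circ> w) z \<bullet> rvec (cr b) = z \<bullet> rvec (cr a)"
    using b0(3) by (simp add: refl_adj cb corefl_corefl[OF two])
  moreover have "rvec b = (refl c (cr c) \<circ> w) (rvec a)" using b(2) b0(2) by simp
  ultimately show ?case using b(1) by blast
qed

lemma weyl_root':
  assumes rd: "reduced_root_datum R cr" and cl: "closedR R S cr"
    and w: "w \<in> weyl S cr" and a: "a \<in> S"
  shows "\<exists>b\<in>S. \<forall>z. w z \<bullet> rvec (cr a) = z \<bullet> rvec (cr b)"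
proof -
  obtain w' where w': "w' \<in> weyl S cr" "w' \<circ> w = id" "w \<circ> w' = id"
    using weyl_inv[OF rd closedR_sub[OF cl] w] by blast
  obtain b where b: "b \<in> S" "\<forall>z. w' z \<bullet> rvec (cr b) = z \<bullet> rvec (cr a)"
    using weyl_root[OF rd cl w'(1) a] by blast
  have "\<forall>z. w z \<bullet> rvec (cr a) = z \<bullet> rvec (cr b)"
  proof
    fix z
    have "w' (w z) = z" using w'(2) by (metis comp_apply id_apply)
    then show "w z \<bullet> rvec (cr a) = z \<bullet> rvec (cr b)" using b(2)[rule_format, of "w z"] by simp
  qed
  then show ?thesis using b(1) by blast
qed

lemma weyl_root_img:
  assumes rd: "reduced_root_datum R cr" and w: "w \<in> weyl R cr" and a: "a \<in> R"
  shows "\<exists>b\<in>R. rvec b = w (rvec a)"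
  using weyl_root[OF rd closedR_R w a] by blast

lemma pos_obtain:
  assumes "pos_system R P"
  obtains v0 where "\<forall>a\<in>R. rvec a \<bullet> rvec v0 \<noteq> 0" "P = {a\<in>R. rvec a \<bullet> rvec v0 > 0}"
  using assms unfolding pos_system_def pairing_def by blast

lemma pos_dich:
  assumes rd: "reduced_root_datum R cr" and ps: "pos_system R P" and a: "a \<in> R"
  shows "a \<in> P \<or> - a \<in> P"
proof -
  obtain v0 where v: "\<forall>a\<in>R. rvec a \<bullet> rvec v0 \<noteq> 0" "P = {a\<in>R. rvec a \<bullet> rvec v0 > 0}"
    using pos_obtain[OF ps] by blast
  have "rvec a \<bullet> rvec v0 \<noteq> 0" using v(1) a by auto
  then show ?thesis using v(2) a rd_neg[OF rd a] by (auto simp: rvec_minus)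
qed

lemma pos_excl:
  assumes ps: "pos_system R P" and a: "a \<in> P"
  shows "- a \<notin> P"
proof -
  obtain v0 where v: "\<forall>a\<in>R. rvec a \<bullet> rvec v0 \<noteq> 0" "P = {a\<in>R. rvec a \<bullet> rvec v0 > 0}"
    using pos_obtain[OF ps] by blast
  then show ?thesis using a by (auto simp: rvec_minus)
qed

lemma pos_sub: "pos_system R P \<Longrightarrow> P \<subseteq> R"
  unfolding pos_system_def by auto




definition gfun :: "(int ^ 'n \<Rightarrow> int ^ 'n) \<Rightarrow> ((int ^ 'n) \<times> int) \<Rightarrow> real ^ 'n \<Rightarrow> real" where
  "gfun cr i v = pairing v (cr (fst i)) - of_int (snd i)"

lemma afflen_eq:
  "afflen P cr x = card (sepset (P \<times> UNIV) (gfun cr) (base_alcove P cr) (eact x ` base_alcove P cr))"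
proof -
  have "{(a, k). a \<in> P \<and> separates (cr a) k (base_alcove P cr) (eact x ` base_alcove P cr)}
      = sepset (P \<times> UNIV) (gfun cr) (base_alcove P cr) (eact x ` base_alcove P cr)"
    unfolding sepset_def separates_def gfun_def by auto
  then show ?thesis unfolding afflen_def by simp
qed

lemma eact_emult: "linear (snd x) \<Longrightarrow> eact (emult x y) v = eact x (eact y v)"
  unfolding eact_def emult_def by (simp add: linear_add)

lemma eact_emult_img: "linear (snd x) \<Longrightarrow> eact (emult x y) ` A = eact x ` (eact y ` A)"
  using eact_emult by (metis image_comp comp_apply image_cong)

lemma int_sign1:
  fixes N :: int and t t' :: real
  assumes "0 < t" "t < 1" "0 < t'" "t' < 1"
  shows "(of_int N + t) * (of_int N + t') > 0"
proof (cases "N \<ge> 0")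
  case True
  then have "of_int N + t > 0" "of_int N + t' > 0" using assms by auto
  then show ?thesis by simp
next
  case False
  then have "N \<le> -1" by simp
  then have "(of_int N::real) \<le> -1" by simp
  then have "of_int N + t < 0" "of_int N + t' < 0" using assms by auto
  then show ?thesis by (simp add: mult_neg_neg)
qed

lemma int_sign2:
  fixes N :: int and t t' :: real
  assumes "-1 < t" "t < 0" "-1 < t'" "t' < 0"
  shows "(of_int N + t) * (of_int N + t') > 0"
proof (cases "N \<ge> 1")
  case True
  then have "(of_int N::real) \<ge> 1" by simp
  then have "of_int N + t > 0" "of_int N + t' > 0" using assms by auto
  then show ?thesis by simp
next
  case False
  then have "(of_int N::real) \<le> 0" by simp
  then have "of_int N + t < 0" "of_int N + t' < 0" using assms by auto
  then show ?thesis by (simp add: mult_neg_neg)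
qed

lemma alc_regular:
  assumes rd: "reduced_root_datum R cr" and ps: "pos_system R P" and cl: "closedR R S cr"
    and lam: "lam \<in> lattice" and w: "w \<in> weyl S cr"
  shows "regular ((P \<inter> S) \<times> UNIV) (gfun cr) (eact (lam, w) ` base_alcove (P \<inter> S) cr)"
  unfolding regular_def
proof (intro ballI)
  fix i x x' assume i: "i \<in> (P \<inter> S) \<times> (UNIV :: int set)" and x: "x \<in> eact (lam, w) ` base_alcove (P \<inter> S) cr"
    and x': "x' \<in> eact (lam, w) ` base_alcove (P \<inter> S) cr"
  obtain a k where ak: "i = (a, k)" by fastforce
  have aS: "a \<in> S" using i ak by auto
  obtain p where p: "p \<in> base_alcove (P \<inter> S) cr" "x = lam + w p" using x unfolding eact_def by auto
  obtain p' where p': "p' \<in> base_alcove (P \<inter> S) cr" "x' = lam + w p'" using x' unfolding eact_def by auto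
  obtain b where b: "b \<in> S" "\<forall>z. w z \<bullet> rvec (cr a) = z \<bullet> rvec (cr b)"
    using weyl_root'[OF rd cl w aS] by blast
  obtain N where N: "lam \<bullet> rvec (cr a) = of_int N" using lattice_inner_int[OF lam] by blast
  have gx: "gfun cr i x = of_int (N - k) + p \<bullet> rvec (cr b)"
    unfolding gfun_def ak pairing_def p(2) using N b(2) by (simp add: inner_add_left)
  have gx': "gfun cr i x' = of_int (N - k) + p' \<bullet> rvec (cr b)"
    unfolding gfun_def ak pairing_def p'(2) using N b(2) by (simp add: inner_add_left)
  have SR: "S \<subseteq> R" using closedR_sub[OF cl] .
  have "b \<in> P \<or> - b \<in> P" using pos_dich[OF rd ps] b(1) SR by auto
  then show "gfun cr i x * gfun cr i x' > 0"
  proof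
    assume "b \<in> P"
    then have "b \<in> P \<inter> S" using b(1) by auto
    then have "0 < p \<bullet> rvec (cr b)" "p \<bullet> rvec (cr b) < 1" "0 < p' \<bullet> rvec (cr b)" "p' \<bullet> rvec (cr b) < 1"
      using p(1) p'(1) unfolding base_alcove_def pairing_def by auto
    then show ?thesis unfolding gx gx' by (rule int_sign1)
  next
    assume "- b \<in> P"
    then have nb: "- b \<in> P \<inter> S" using closedR_neg[OF rd cl b(1)] by auto
    have cn: "rvec (cr (-b)) = - rvec (cr b)" using cr_neg[OF rd] b(1) SR by (auto simp: rvec_minus)
    have "0 < p \<bullet> rvec (cr (-b))" "p \<bullet> rvec (cr (-b)) < 1" "0 < p' \<bullet> rvec (cr (-b))" "p' \<bullet> rvec (cr (-b)) < 1"
      using p(1) p'(1) nb unfolding base_alcove_def pairing_def by blast+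
    then have "-1 < p \<bullet> rvec (cr b)" "p \<bullet> rvec (cr b) < 0" "-1 < p' \<bullet> rvec (cr b)" "p' \<bullet> rvec (cr b) < 0"
      unfolding cn by (auto simp: inner_minus_right)
    then show ?thesis unfolding gx gx' by (rule int_sign2)
  qed
qed

lemma between_bound:
  fixes x y :: real
  assumes "(x - of_int k) * (y - of_int k) < 0"
  shows "\<bar>of_int k\<bar> \<le> \<bar>x\<bar> + \<bar>y\<bar>"
  using assms by (auto simp: mult_less_0_iff)

lemma sep_finite:
  assumes fQ: "finite Q" and p: "p \<in> A" and q: "q \<in> B"
  shows "finite (sepset (Q \<times> UNIV) (gfun cr) A B)"
proof -
  define M where "M a = \<bar>pairing p (cr a)\<bar> + \<bar>pairing q (cr a)\<bar>" for a
  have "sepset (Q \<times> UNIV) (gfun cr) A B \<subseteq> (SIGMA a:Q. {-\<lceil>M a\<rceil>..\<lceil>M a\<rceil>})"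
  proof
    fix i assume i: "i \<in> sepset (Q \<times> UNIV) (gfun cr) A B"
    obtain a k where ak: "i = (a, k)" by fastforce
    have aQ: "a \<in> Q" using i ak unfolding sepset_def by auto
    have "gfun cr i p * gfun cr i q < 0" using i p q unfolding sepset_def by auto
    then have "(pairing p (cr a) - of_int k) * (pairing q (cr a) - of_int k) < 0"
      unfolding gfun_def ak by simp
    then have "\<bar>of_int k\<bar> \<le> M a" unfolding M_def by (rule between_bound)
    then have "k \<in> {-\<lceil>M a\<rceil>..\<lceil>M a\<rceil>}"
      by (auto simp: abs_le_iff) (linarith+)
    then show "i \<in> (SIGMA a:Q. {-\<lceil>M a\<rceil>..\<lceil>M a\<rceil>})" using aQ ak by auto
  qed
  moreover have "finite (SIGMA a:Q. {-\<lceil>M a\<rceil>..\<lceil>M a\<rceil>})" using fQ by (intro finite_SigmaI) auto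
  ultimately show ?thesis using finite_subset by blast
qed

lemma eact_affrefl: "eact (affrefl cr b m) v = v - (gfun cr (b, m) v) *\<^sub>R rvec b"
  unfolding eact_def affrefl_def refl_def gfun_def pairing_def by (simp add: algebra_simps)

lemma affrefl_g: "gfun cr (a, k) (eact (affrefl cr b m) v) = gfun cr (a, k) v - gfun cr (b, m) v * (rvec b \<bullet> rvec (cr a))"
  unfolding eact_affrefl by (simp add: gfun_def pairing_def inner_diff_left algebra_simps)

lemma affrefl_flip:
  assumes "rvec b \<bullet> rvec (cr b) = 2"
  shows "gfun cr (b, m) (eact (affrefl cr b m) v) = - gfun cr (b, m) v"
  using affrefl_g[of cr b m b m v] assms by simp

lemma affrefl_rr:
  assumes "rvec b \<bullet> rvec (cr b) = 2"
  shows "eact (affrefl cr b m) (eact (affrefl cr b m) v) = v"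
  using affrefl_flip[where b=b and cr=cr, OF assms] unfolding eact_affrefl[of cr b m "eact (affrefl cr b m) v"]
  by (simp add: eact_affrefl algebra_simps)

lemma gfun_uniq:
  assumes rd: "reduced_root_datum R cr" and ps: "pos_system R P" and QP: "Q \<subseteq> P"
    and i: "i \<in> Q \<times> UNIV" and j: "j \<in> Q \<times> UNIV" and e: "e = 1 \<or> e = -1"
    and eq: "\<forall>v. gfun cr i v = e * gfun cr j v"
  shows "i = j"
proof -
  obtain a k where ak: "i = (a,k)" by fastforce
  obtain b l where bl: "j = (b,l)" by fastforce
  have aP: "a \<in> P" and bP: "b \<in> P" using i j ak bl QP by auto
  have PR: "P \<subseteq> R" using pos_sub[OF ps] .
  have e0: "of_int k = e * of_int l" using eq[rule_format, of 0] unfolding ak bl gfun_def pairing_def by simp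
  have ev: "v \<bullet> rvec (cr a) = e * (v \<bullet> rvec (cr b))" for v
    using eq[rule_format, of v] e0 unfolding ak bl gfun_def pairing_def by (simp add: algebra_simps)
  have "rvec (cr a) = e *\<^sub>R rvec (cr b)"
  proof -
    define d where "d = rvec (cr a) - e *\<^sub>R rvec (cr b)"
    have "d \<bullet> d = 0" using ev[of d] unfolding d_def by (simp add: inner_diff_right)
    then show ?thesis unfolding d_def by simp
  qed
  from e show ?thesis
  proof
    assume e1: "e = 1"
    then have "cr a = cr b" using \<open>rvec (cr a) = e *\<^sub>R rvec (cr b)\<close> by (simp add: rvec_eq_iff)
    then have "a = b" using rd_inj[OF rd] aP bP PR by (auto dest: inj_onD)
    moreover have "k = l" using e0 e1 by simp
    ultimately show ?thesis using ak bl by simp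
  next
    assume e1: "e = -1"
    then have "rvec (cr a) = rvec (cr (-b))" using \<open>rvec (cr a) = e *\<^sub>R rvec (cr b)\<close> cr_neg[OF rd] bP PR
      by (auto simp: rvec_minus)
    then have "cr a = cr (-b)" using rvec_eq_iff by blast
    then have "a = -b" using rd_inj[OF rd] aP bP PR rd_neg[OF rd] by (auto dest: inj_onD)
    then show ?thesis using pos_excl[OF ps bP] aP by simp
  qed
qed

lemma affrefl_sig:
  assumes rd: "reduced_root_datum R cr" and ps: "pos_system R P" and cl: "closedR R S cr"
    and b: "b \<in> P \<inter> S" and i: "i \<in> (P \<inter> S) \<times> UNIV"
  shows "\<exists>j\<in>(P \<inter> S) \<times> UNIV. \<exists>e. (e = 1 \<or> e = -1) \<and>
            (\<forall>v. gfun cr j (eact (affrefl cr b m) v) = e * gfun cr i v)"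
proof -
  obtain a k where ak: "i = (a,k)" by fastforce
  have SR: "S \<subseteq> R" using closedR_sub[OF cl] .
  have aS: "a \<in> S" and bS: "b \<in> S" using i ak b by auto
  have two: "rvec b \<bullet> rvec (cr b) = 2" using rd_two'[OF rd] bS SR by auto
  obtain a' where a': "a' \<in> S" "rvec a' = refl b (cr b) (rvec a)" using closedR_refl_ex[OF rd cl aS bS] by blast
  have ca': "rvec (cr a') = corefl b (cr b) (rvec (cr a))"
    using coroot_refl[OF rd _ _ _ a'(2)] aS bS a'(1) SR by auto
  obtain N where N: "rvec b \<bullet> rvec (cr a) = of_int N" using rvec_inner_int' by blast
  define r where "r = eact (affrefl cr b m)"
  have rr: "r (r v) = v" for v unfolding r_def using affrefl_rr[where b=b and cr=cr, OF two] .
  have key: "gfun cr (a', k - m * N) v = gfun cr (a, k) (r v)" for v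
  proof -
    have "gfun cr (a, k) (r v) = v \<bullet> rvec (cr a) - of_int k - (v \<bullet> rvec (cr b) - of_int m) * of_int N"
      unfolding r_def affrefl_g N by (simp add: gfun_def pairing_def)
    moreover have "gfun cr (a', k - m * N) v = v \<bullet> rvec (cr a) - (rvec b \<bullet> rvec (cr a)) * (v \<bullet> rvec (cr b)) - of_int (k - m * N)"
      by (simp add: gfun_def pairing_def ca' corefl_def inner_diff_right algebra_simps)
    ultimately show ?thesis unfolding N by (simp add: algebra_simps)
  qed
  have key2: "gfun cr (a', k - m * N) (r v) = gfun cr (a, k) v" for v
    using key[of "r v"] rr by simp
  have "a' \<in> P \<or> - a' \<in> P" using pos_dich[OF rd ps] a'(1) SR by auto
  then show ?thesis
  proof
    assume "a' \<in> P"
    then show ?thesis using key2 a'(1) ak unfolding r_def by (intro bexI[of _ "(a', k - m * N)"] exI[of _ 1]) auto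
  next
    assume "- a' \<in> P"
    have neg: "gfun cr (- a', - (k - m * N)) v = - gfun cr (a', k - m * N) v" for v
      unfolding gfun_def pairing_def using cr_neg[OF rd] a'(1) SR by (auto simp: rvec_minus)
    have "- a' \<in> P \<inter> S" using \<open>- a' \<in> P\<close> closedR_neg[OF rd cl a'(1)] by auto
    then show ?thesis using key2 neg ak unfolding r_def
      by (intro bexI[of _ "(- a', - (k - m * N))"] exI[of _ "-1"]) auto
  qed
qed




lemma sum_refl_inv:
  assumes rd: "reduced_root_datum R cr" and a: "a \<in> R"
  shows "(\<Sum>b\<in>R. F (refl a (cr a) (rvec b))) = (\<Sum>b\<in>R. F (rvec b))"
proof -
  let ?s = "refl a (cr a)"
  have two: "pairing (rvec a) (cr a) = 2" using rd_two[OF rd a] .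
  have injs: "inj ?s" by (metis inj_def refl_refl[OF two])
  have "(\<Sum>b\<in>R. F (?s (rvec b))) = (\<Sum>x\<in>rvec ` R. F (?s x))"
    using sum.reindex[of rvec R "\<lambda>x. F (?s x)"] rvec_inj by (simp add: inj_on_def rvec_eq_iff)
  also have "\<dots> = (\<Sum>y\<in>?s ` (rvec ` R). F y)"
    using sum.reindex[of ?s "rvec ` R" F] injs by (simp add: inj_on_def inj_def)
  also have "\<dots> = (\<Sum>y\<in>rvec ` R. F y)" using rd_refl_img[OF rd a] by simp
  also have "\<dots> = (\<Sum>b\<in>R. F (rvec b))"
    using sum.reindex[of rvec R F] rvec_inj by (simp add: inj_on_def rvec_eq_iff)
  finally show ?thesis .
qed

definition Phi :: "(int ^ 'n) set \<Rightarrow> real ^ 'n \<Rightarrow> real ^ 'n \<Rightarrow> real" where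
  "Phi R y z = (\<Sum>b\<in>R. (rvec b \<bullet> y) * (rvec b \<bullet> z))"

lemma Phi_key:
  assumes rd: "reduced_root_datum R cr" and a: "a \<in> R"
  shows "2 * Phi R y (rvec (cr a)) = (rvec a \<bullet> y) * Phi R (rvec (cr a)) (rvec (cr a))"
proof -
  let ?T = "corefl a (cr a)"
  let ?c = "rvec (cr a)"
  have two: "pairing (rvec a) (cr a) = 2" using rd_two[OF rd a] .
  have inv: "Phi R (?T y) (?T z) = Phi R y z" for z
  proof -
    have "Phi R (?T y) (?T z) = (\<Sum>b\<in>R. (refl a (cr a) (rvec b) \<bullet> y) * (refl a (cr a) (rvec b) \<bullet> z))"
      unfolding Phi_def refl_adj ..
    also have "\<dots> = Phi R y z" unfolding Phi_def
      by (rule sum_refl_inv[OF rd a, of "\<lambda>x. (x \<bullet> y) * (x \<bullet> z)"])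
    finally show ?thesis .
  qed
  have Tc: "?T ?c = - ?c" using corefl_self[OF two] .
  have neg: "Phi R w (- ?c) = - Phi R w ?c" for w
    unfolding Phi_def by (simp add: sum_negf)
  have exp: "Phi R (?T y) ?c = Phi R y ?c - (rvec a \<bullet> y) * Phi R ?c ?c"
    unfolding Phi_def corefl_def
    by (simp add: inner_diff_right sum_subtractf sum_distrib_left algebra_simps)
  have "Phi R y ?c = Phi R (?T y) (?T ?c)" using inv[of ?c] by simp
  also have "\<dots> = - Phi R (?T y) ?c" unfolding Tc neg ..
  finally show ?thesis using exp by simp
qed

lemma Phi_pos:
  assumes rd: "reduced_root_datum R cr" and a: "a \<in> R"
  shows "Phi R (rvec (cr a)) (rvec (cr a)) \<ge> 4"
proof -
  have "(rvec a \<bullet> rvec (cr a)) * (rvec a \<bullet> rvec (cr a)) \<le> Phi R (rvec (cr a)) (rvec (cr a))"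
    unfolding Phi_def by (rule member_le_sum[OF a]) (auto simp: rd_fin[OF rd])
  then show ?thesis using rd_two'[OF rd a] by simp
qed

lemma base_alcove_ne:
  assumes rd: "reduced_root_datum R cr" and ps: "pos_system R P"
  shows "base_alcove P cr \<noteq> {}"
proof -
  obtain v0 where v: "\<forall>a\<in>R. rvec a \<bullet> rvec v0 \<noteq> 0" "P = {a\<in>R. rvec a \<bullet> rvec v0 > 0}"
    using pos_obtain[OF ps] by blast
  define z where "z = (\<Sum>b\<in>R. (rvec b \<bullet> rvec v0) *\<^sub>R rvec b)"
  have PR: "P \<subseteq> R" using pos_sub[OF ps] .
  have zpos: "z \<bullet> rvec (cr a) > 0" if aP: "a \<in> P" for a
  proof -
    have aR: "a \<in> R" using aP PR by auto
    have "z \<bullet> rvec (cr a) = Phi R (rvec v0) (rvec (cr a))"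
      unfolding z_def Phi_def by (simp add: inner_sum_left)
    moreover have "2 * Phi R (rvec v0) (rvec (cr a)) = (rvec a \<bullet> rvec v0) * Phi R (rvec (cr a)) (rvec (cr a))"
      using Phi_key[OF rd aR] .
    moreover have "rvec a \<bullet> rvec v0 > 0" using aP v(2) by auto
    moreover have "Phi R (rvec (cr a)) (rvec (cr a)) > 0" using Phi_pos[OF rd aR] by simp
    ultimately show ?thesis by (smt (verit) mult_pos_pos)
  qed
  define T where "T = 1 + (\<Sum>a\<in>P. z \<bullet> rvec (cr a))"
  have finP: "finite P" using rd_fin[OF rd] PR finite_subset by blast
  have Tge: "z \<bullet> rvec (cr a) < T" if "a \<in> P" for a
  proof -
    have "z \<bullet> rvec (cr a) \<le> (\<Sum>a\<in>P. z \<bullet> rvec (cr a))"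
      by (rule member_le_sum[OF that]) (use zpos finP in \<open>auto intro: less_imp_le\<close>)
    then show ?thesis unfolding T_def by simp
  qed
  have Tpos: "T > 0" unfolding T_def using zpos by (smt (verit) sum_nonneg less_imp_le)
  have "(1 / T) *\<^sub>R z \<in> base_alcove P cr"
    unfolding base_alcove_def pairing_def
  proof (intro CollectI ballI conjI)
    fix a assume a: "a \<in> P"
    show "0 < (1 / T) *\<^sub>R z \<bullet> rvec (cr a)" using zpos[OF a] Tpos by simp
    show "(1 / T) *\<^sub>R z \<bullet> rvec (cr a) < 1" using Tge[OF a] Tpos by (simp add: divide_less_eq)
  qed
  then show ?thesis by auto
qed




definition gl :: "int ^ 'n \<Rightarrow> real ^ 'n \<Rightarrow> real" where
  "gl a y = rvec a \<bullet> y"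

lemma regular_single: "(\<And>i. i \<in> I \<Longrightarrow> g i x \<noteq> 0) \<Longrightarrow> regular I g {x}"
  unfolding regular_def by (force simp: zero_less_mult_iff linorder_neq_iff)

lemma finlen_le:
  assumes fP: "finite P" and lin: "linear w'" and inv: "\<And>x. w' (w x) = x"
  shows "finlen P w \<le> finlen P w'"
proof -
  define Xw where "Xw = {a\<in>P. \<exists>b\<in>P. w (rvec a) = - rvec b}"
  define Xw' where "Xw' = {a\<in>P. \<exists>b\<in>P. w' (rvec a) = - rvec b}"
  define f where "f a = (SOME c. c \<in> P \<and> rvec c = - w (rvec a))" for a
  have f: "f a \<in> P \<and> rvec (f a) = - w (rvec a)" if aX: "a \<in> Xw" for a
  proof -
    obtain b where "b \<in> P" "w (rvec a) = - rvec b" using aX unfolding Xw_def by auto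
    then have "\<exists>c. c \<in> P \<and> rvec c = - w (rvec a)" by auto
    then show ?thesis unfolding f_def by (rule someI_ex)
  qed
  have "inj_on f Xw"
  proof
    fix a1 a2 assume "a1 \<in> Xw" "a2 \<in> Xw" "f a1 = f a2"
    then have "w (rvec a1) = w (rvec a2)" using f by (metis neg_equal_iff_equal)
    then have "rvec a1 = rvec a2" using inv by metis
    then show "a1 = a2" using rvec_eq_iff by blast
  qed
  moreover have "f ` Xw \<subseteq> Xw'"
  proof
    fix c assume "c \<in> f ` Xw"
    then obtain a where a: "a \<in> Xw" "c = f a" by auto
    have "w' (rvec c) = - rvec a" using f[OF a(1)] a(2) inv linear_neg[OF lin] by metis
    then show "c \<in> Xw'" using f[OF a(1)] a unfolding Xw'_def Xw_def by auto
  qed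
  moreover have "finite Xw'" unfolding Xw'_def using fP by auto
  ultimately have "card Xw \<le> card Xw'" by (rule card_inj_on_le)
  then show ?thesis unfolding finlen_def Xw_def Xw'_def by simp
qed

lemma finlen_sepset:
  assumes rd: "reduced_root_datum R cr" and ps: "pos_system R P" and w: "w \<in> weyl R cr"
    and v: "\<forall>a\<in>R. rvec a \<bullet> v0 \<noteq> 0" "P = {a\<in>R. rvec a \<bullet> v0 > 0}"
  shows "finlen P w = card (sepset P gl {v0} {adjoint w v0})"
proof -
  have lin: "linear w" using weyl_linear[OF w] .
  have PR: "P \<subseteq> R" using pos_sub[OF ps] .
  have "{a\<in>P. \<exists>b\<in>P. w (rvec a) = - rvec b} = sepset P gl {v0} {adjoint w v0}"
  proof (rule set_eqI, rule iffI)
    fix a assume a: "a \<in> {a\<in>P. \<exists>b\<in>P. w (rvec a) = - rvec b}"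
    then obtain b where b: "a \<in> P" "b \<in> P" "w (rvec a) = - rvec b" by auto
    have "gl a (adjoint w v0) = - (rvec b \<bullet> v0)" unfolding gl_def adjoint_works[OF lin] b(3) by simp
    moreover have "rvec b \<bullet> v0 > 0" "rvec a \<bullet> v0 > 0" using b v(2) by auto
    ultimately show "a \<in> sepset P gl {v0} {adjoint w v0}" unfolding sepset_def gl_def
      using b(1) by (simp add: mult_pos_neg)
  next
    fix a assume a: "a \<in> sepset P gl {v0} {adjoint w v0}"
    then have aP: "a \<in> P" and neg: "(rvec a \<bullet> v0) * (w (rvec a) \<bullet> v0) < 0"
      by (auto simp: sepset_def gl_def adjoint_works[OF lin])
    have "rvec a \<bullet> v0 > 0" using aP v(2) by auto
    then have wn: "w (rvec a) \<bullet> v0 < 0" using neg by (simp add: mult_less_0_iff)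
    obtain d where d: "d \<in> R" "rvec d = w (rvec a)" using weyl_root_img[OF rd w] aP PR by blast
    have "- d \<in> R" using rd_neg[OF rd d(1)] .
    moreover have "rvec (-d) \<bullet> v0 > 0" using wn d(2) by (simp add: rvec_minus)
    ultimately have "- d \<in> P" using v(2) by auto
    moreover have "w (rvec a) = - rvec (-d)" using d(2) by (simp add: rvec_minus)
    ultimately show "a \<in> {a\<in>P. \<exists>b\<in>P. w (rvec a) = - rvec b}" using aP by blast
  qed
  then show ?thesis unfolding finlen_def by simp
qed

lemma simple_pos:
  assumes rd: "reduced_root_datum R cr" and ps: "pos_system R P"
    and u: "u \<in> weyl R cr" and u': "u' \<in> weyl R cr" "u' \<circ> u = id" "u \<circ> u' = id"
    and v: "\<forall>a\<in>R. rvec a \<bullet> v0 \<noteq> 0" "P = {a\<in>R. rvec a \<bullet> v0 > 0}"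
    and al: "al \<in> P"
    and len: "finlen P (refl al (cr al) \<circ> u) > finlen P u"
  shows "u' (rvec al) \<bullet> v0 > 0"
proof (rule ccontr)
  assume "\<not> u' (rvec al) \<bullet> v0 > 0"
  have PR: "P \<subseteq> R" using pos_sub[OF ps] .
  have finP: "finite P" using rd_fin[OF rd] PR finite_subset by blast
  have alR: "al \<in> R" using al PR by auto
  have two: "pairing (rvec al) (cr al) = 2" using rd_two[OF rd alR] .
  let ?s = "refl al (cr al)"
  let ?r = "corefl al (cr al)"
  have linu: "linear u" using weyl_linear[OF u] .
  have linu': "linear u'" using weyl_linear[OF u'(1)] .
  have lins: "linear ?s" by (rule refl_linear)
  have uu': "u' (u x) = x" "u (u' x) = x" for x using u'(2,3) by (metis comp_apply id_apply)+
  have ss: "?s (?s x) = x" for x using refl_refl[OF two] .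
  have nz: "u' (rvec a) \<bullet> v0 \<noteq> 0" if aR: "a \<in> R" for a
  proof -
    obtain d where "d \<in> R" "rvec d = u' (rvec a)" using weyl_root_img[OF rd u'(1) aR] by blast
    then show ?thesis using v(1) by metis
  qed
  have neg: "u' (rvec al) \<bullet> v0 < 0" using nz[OF alR] \<open>\<not> u' (rvec al) \<bullet> v0 > 0\<close> by linarith
  define z where "z = adjoint u' v0"
  have gz: "gl a z = u' (rvec a) \<bullet> v0" for a unfolding gl_def z_def adjoint_works[OF linu'] ..
  have grz: "gl a (?r z) = u' (?s (rvec a)) \<bullet> v0" for a
    unfolding gl_def refl_adj[symmetric] z_def adjoint_works[OF linu'] ..
  have us: "u' \<circ> ?s \<in> weyl R cr" using weyl_comp[OF u'(1) weyl_refl[OF alR]] .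
  have sus: "?s \<circ> u \<in> weyl R cr" using weyl_comp[OF weyl_refl[OF alR] u] .
  have L1: "finlen P u = finlen P u'"
    using finlen_le[OF finP linu' uu'(1)] finlen_le[OF finP linu uu'(2)] by simp
  have L2: "finlen P (?s \<circ> u) = finlen P (u' \<circ> ?s)"
  proof -
    have a: "(u' \<circ> ?s) ((?s \<circ> u) x) = x" for x using ss uu' by simp
    have b: "(?s \<circ> u) ((u' \<circ> ?s) x) = x" for x using ss uu' by simp
    show ?thesis using finlen_le[OF finP weyl_linear[OF us] a] finlen_le[OF finP weyl_linear[OF sus] b] by (simp add: comp_def)
  qed
  have S1: "finlen P u' = card (sepset P gl {v0} {z})"
    using finlen_sepset[OF rd ps u'(1) v] unfolding z_def .
  have S2: "finlen P (u' \<circ> ?s) = card (sepset P gl {v0} (?r ` {z}))"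
  proof -
    have "finlen P (u' \<circ> ?s) = card (sepset P gl {v0} {adjoint (u' \<circ> ?s) v0})"
      using finlen_sepset[OF rd ps us v] .
    moreover have "gl a (adjoint (u' \<circ> ?s) v0) = gl a (?r z)" for a
      by (simp only: grz) (simp add: gl_def adjoint_works[OF weyl_linear[OF us]])
    then have "sepset P gl {v0} {adjoint (u' \<circ> ?s) v0} = sepset P gl {v0} (?r ` {z})"
      unfolding sepset_def by simp
    ultimately show ?thesis by simp
  qed
  have rr: "?r (?r y) = y" for y using corefl_corefl[OF two] .
  have "card (sepset P gl {v0} (?r ` {z})) < card (sepset P gl {v0} (?r ` (?r ` {z})))"
  proof (rule AL[where hz = al])
    show "\<And>v. ?r (?r v) = v" by (rule rr)
    show "al \<in> P" by fact
    show "\<exists>j\<in>P. \<exists>e. (e = 1 \<or> e = -1) \<and> (\<forall>v. gl j (?r v) = e * gl i v)" if i: "i \<in> P" for i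
    proof -
      have iR: "i \<in> R" using i PR by auto
      obtain d where d: "d \<in> R" "rvec d = ?s (rvec i)" using rd_refl_ex[OF rd iR alR] by blast
      have e: "gl d (?r v) = gl i v" for v unfolding gl_def refl_adj[symmetric] d(2) ss ..
      have "d \<in> P \<or> - d \<in> P" using pos_dich[OF rd ps d(1)] .
      then show ?thesis
      proof
        assume "d \<in> P" then show ?thesis using e by (intro bexI[of _ d] exI[of _ 1]) auto
      next
        assume "- d \<in> P"
        moreover have "gl (-d) (?r v) = -1 * gl i v" for v using e[of v] unfolding gl_def by (simp add: rvec_minus)
        ultimately show ?thesis by (intro bexI[of _ "-d"] exI[of _ "-1"]) auto
      qed
    qed
    show "i = j" if i: "i \<in> P" and j: "j \<in> P" and e: "e = 1 \<or> e = -1" and eq: "\<forall>v. gl i v = e * gl j v" for i j e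
    proof -
      have "rvec i = e *\<^sub>R rvec j"
      proof -
        define d where "d = rvec i - e *\<^sub>R rvec j"
        have "d \<bullet> d = 0" using eq[rule_format, of d] unfolding d_def gl_def by (simp add: inner_diff_left inner_commute)
        then show ?thesis unfolding d_def by simp
      qed
      from e show ?thesis
      proof
        assume "e = 1" then show ?thesis using \<open>rvec i = e *\<^sub>R rvec j\<close> by (simp add: rvec_eq_iff)
      next
        assume "e = -1" then have "rvec i = rvec (-j)" using \<open>rvec i = e *\<^sub>R rvec j\<close> by (simp add: rvec_minus)
        then have "i = -j" by (simp add: rvec_eq_iff)
        then show ?thesis using pos_excl[OF ps j] i by simp
      qed
    qed
    show "\<exists>c. \<forall>v. gl i (?r v) = gl i v - gl al v * c" if "i \<in> P" for i
      by (rule exI[of _ "rvec i \<bullet> rvec (cr al)"]) (simp add: gl_def corefl_def inner_diff_right)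
    show "\<And>v. gl al (?r v) = - gl al v"
      using two by (simp add: gl_def corefl_def inner_diff_right pairing_def)
    show "regular P gl {v0}" by (rule regular_single) (use v PR in \<open>auto simp: gl_def\<close>)
    show "regular P gl (?r ` {z})"
    proof -
      have "gl i (?r z) \<noteq> 0" if i: "i \<in> P" for i
      proof -
        obtain d where d: "d \<in> R" "rvec d = ?s (rvec i)" using rd_refl_ex[OF rd _ alR] i PR by blast
        show ?thesis unfolding grz d(2)[symmetric] using nz[OF d(1)] .
      qed
      then show ?thesis by (simp add: regular_single)
    qed
    show "regular P gl (?r ` (?r ` {z}))"
    proof -
      have "gl i z \<noteq> 0" if i: "i \<in> P" for i unfolding gz using nz i PR by auto
      then show ?thesis by (simp add: regular_single rr)
    qed
    show "{v0} \<noteq> {}" "?r ` {z} \<noteq> {}" by auto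
    show "\<forall>p\<in>{v0}. \<forall>q\<in>?r ` {z}. gl al p * gl al q > 0"
    proof -
      have "gl al (?r z) = - gl al z" using two by (simp add: gl_def corefl_def inner_diff_right pairing_def)
      then have "gl al (?r z) > 0" using neg gz by simp
      moreover have "gl al v0 > 0" using al v(2) by (auto simp: gl_def)
      ultimately show ?thesis by simp
    qed
    show "finite (sepset P gl {v0} (?r ` (?r ` {z})))"
      using finP unfolding sepset_def by auto
  qed
  then have "finlen P (?s \<circ> u) < finlen P u"
    using L1 L2 S1 S2 by (simp add: rr)
  then show False using len by simp
qed




lemma WM_pos:
  assumes rd: "reduced_root_datum R cr" and ps: "pos_system R P" and lv: "levi_roots R RM"
    and uW: "u \<in> WM_set R RM P cr"
    and u': "u' \<in> weyl R cr" "u' \<circ> u = id" "u \<circ> u' = id"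
  shows "\<forall>a\<in>P \<inter> RM. \<exists>b\<in>P. rvec b = u' (rvec a)"
proof -
  obtain v0 where v: "\<forall>a\<in>R. rvec a \<bullet> rvec v0 \<noteq> 0" "P = {a\<in>R. rvec a \<bullet> rvec v0 > 0}"
    using pos_obtain[OF ps] by blast
  have u: "u \<in> weyl R cr" using uW unfolding WM_set_def by auto
  have PR: "P \<subseteq> R" using pos_sub[OF ps] .
  define Q where "Q = P \<inter> RM"
  have finQ: "finite Q" unfolding Q_def using rd_fin[OF rd] PR finite_subset by blast
  define h where "h a = rvec a \<bullet> rvec v0" for a
  define m where "m a = card {x\<in>Q. h x < h a}" for a
  have linu': "linear u'" using weyl_linear[OF u'(1)] .
  have main: "u' (rvec a) \<bullet> rvec v0 > 0" if "a \<in> Q" for a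
    using that
  proof (induction "m a" arbitrary: a rule: less_induct)
    case less
    show ?case
    proof (cases "a \<in> simple_roots Q")
      case True
      then have "finlen P (refl a (cr a) \<circ> u) > finlen P u" using uW unfolding WM_set_def Q_def by auto
      moreover have "a \<in> P" using less.prems Q_def by auto
      ultimately show ?thesis using simple_pos[OF rd ps u u' v] by blast
    next
      case False
      then obtain b c where bc: "b \<in> Q" "c \<in> Q" "a = b + c" using less.prems unfolding simple_roots_def by auto
      have hpos: "h x > 0" if "x \<in> Q" for x using that v(2) unfolding Q_def h_def by auto
      have ha: "h a = h b + h c" unfolding h_def bc(3) rvec_add by (simp add: inner_add_left)
      have lt: "m x < m a" if x: "x \<in> Q" "h x < h a" for x
      proof -
        have "{y\<in>Q. h y < h x} \<subset> {y\<in>Q. h y < h a}" using x by auto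
        then show ?thesis unfolding m_def by (rule psubset_card_mono[rotated]) (use finQ in auto)
      qed
      have "h b < h a" "h c < h a" using ha hpos bc by auto
      then have "u' (rvec b) \<bullet> rvec v0 > 0" "u' (rvec c) \<bullet> rvec v0 > 0"
        using less.hyps lt bc by auto
      moreover have "u' (rvec a) = u' (rvec b) + u' (rvec c)"
        unfolding bc(3) rvec_add linear_add[OF linu'] ..
      ultimately show ?thesis by (simp add: inner_add_left)
    qed
  qed
  show ?thesis
  proof
    fix a assume a: "a \<in> P \<inter> RM"
    obtain d where d: "d \<in> R" "rvec d = u' (rvec a)" using weyl_root_img[OF rd u'(1)] a PR by blast
    have "d \<in> P" using main[of a] a d v(2) unfolding Q_def by auto
    then show "\<exists>b\<in>P. rvec b = u' (rvec a)" using d by blast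
  qed
qed

definition cj :: "(real ^ 'n \<Rightarrow> real ^ 'n) \<Rightarrow> (real ^ 'n \<Rightarrow> real ^ 'n) \<Rightarrow> ('n::finite) ewel \<Rightarrow> 'n ewel" where
  "cj u' u x = emult (0, u') (emult x (0, u))"

lemma cj_eq: "linear (snd x) \<Longrightarrow> linear u' \<Longrightarrow> cj u' u x = (u' (fst x), u' \<circ> snd x \<circ> u)"
  unfolding cj_def emult_def by (simp add: linear_0 comp_assoc)

lemma eact_id0: "eact (0, id) v = v" unfolding eact_def by simp

lemma alc_regular_base:
  assumes rd: "reduced_root_datum R cr" and ps: "pos_system R P" and cl: "closedR R S cr"
  shows "regular ((P \<inter> S) \<times> UNIV) (gfun cr) (base_alcove (P \<inter> S) cr)"
proof -
  have "regular ((P \<inter> S) \<times> UNIV) (gfun cr) (eact (0, id) ` base_alcove (P \<inter> S) cr)"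
    by (rule alc_regular[OF rd ps cl lattice_zero weyl.weyl_id])
  then show ?thesis by (simp add: eact_id0)
qed

lemma ext_weyl_step:
  assumes "y \<in> ext_weyl S cr" "a \<in> S"
  shows "emult (affrefl cr a k) y \<in> ext_weyl S cr"
proof -
  obtain lam w where y: "y = (lam, w)" "lam \<in> lattice" "w \<in> weyl S cr" using assms(1) unfolding ext_weyl_def by auto
  have "of_int k *\<^sub>R rvec a + refl a (cr a) lam \<in> lattice"
    by (intro lattice_add lattice_smult lattice_rvec lattice_refl y(2))
  moreover have "refl a (cr a) \<circ> w \<in> weyl S cr" using y(3) assms(2) by (rule weyl.weyl_step)
  ultimately show ?thesis unfolding ext_weyl_def emult_def affrefl_def y by simp
qed




lemma step_conj:
  assumes rd: "reduced_root_datum R cr" and ps: "pos_system R P" and lv: "levi_roots R RM"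
    and u: "u \<in> weyl R cr" and u': "u' \<in> weyl R cr" "u' \<circ> u = id" "u \<circ> u' = id"
    and pos: "\<forall>a\<in>P \<inter> RM. \<exists>b\<in>P. rvec b = u' (rvec a)"
    and y: "y \<in> ext_weyl RM cr" and a: "a \<in> P \<inter> RM"
    and len: "afflen (P \<inter> RM) cr y < afflen (P \<inter> RM) cr (emult (affrefl cr a k) y)"
  shows "(cj u' u y, cj u' u (emult (affrefl cr a k) y)) \<in> bruhat_step P cr"
proof -
  define Q where "Q = P \<inter> RM"
  define AM where "AM = base_alcove Q cr"
  define AG where "AG = base_alcove P cr"
  have cl: "closedR R RM cr" using closedR_levi[OF lv] .
  have clR: "closedR R R cr" by (rule closedR_R)
  have PR: "P \<subseteq> R" using pos_sub[OF ps] .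
  have PRe: "P \<inter> R = P" using PR by auto
  have RMR: "RM \<subseteq> R" using closedR_sub[OF cl] .
  have finP: "finite P" using rd_fin[OF rd] PR finite_subset by blast
  have finQ: "finite Q" using finP Q_def by auto
  have aR: "a \<in> R" using a PR by auto
  have two_a: "rvec a \<bullet> rvec (cr a) = 2" using rd_two'[OF rd aR] .
  obtain lam w where yy: "y = (lam, w)" "lam \<in> lattice" "w \<in> weyl RM cr" using y unfolding ext_weyl_def by auto
  define t where "t = affrefl cr a k"
  define r where "r = eact t"
  have rr: "r (r v) = v" for v unfolding r_def t_def using affrefl_rr[where b=a and cr=cr, OF two_a] .
  have lint: "linear (snd t)" unfolding t_def affrefl_def by (simp add: refl_linear)
  have ty: "emult t y \<in> ext_weyl RM cr" unfolding t_def using ext_weyl_step[OF y] a by auto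
  obtain lam2 w2 where tyy: "emult t y = (lam2, w2)" "lam2 \<in> lattice" "w2 \<in> weyl RM cr" using ty unfolding ext_weyl_def by auto
  have tyimg: "eact (emult t y) ` X = r ` (eact y ` X)" for X unfolding r_def using eact_emult_img[OF lint] .
  have AGne: "AG \<noteq> {}" unfolding AG_def using base_alcove_ne[OF rd ps] .
  have AGsub: "AG \<subseteq> AM" unfolding AG_def AM_def Q_def base_alcove_def by auto
  have AMne: "AM \<noteq> {}" using AGne AGsub by auto
  have regAM: "regular (Q \<times> UNIV) (gfun cr) AM"
    unfolding Q_def AM_def by (rule alc_regular_base[OF rd ps cl])
  have regyM: "regular (Q \<times> UNIV) (gfun cr) (eact y ` AM)"
    unfolding Q_def AM_def yy(1) by (rule alc_regular[OF rd ps cl yy(2,3)])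
  have regtyM: "regular (Q \<times> UNIV) (gfun cr) (r ` (eact y ` AM))"
    unfolding tyimg[symmetric] Q_def AM_def tyy(1) by (rule alc_regular[OF rd ps cl tyy(2,3)])
  have aQ: "(a, k) \<in> Q \<times> UNIV" using a Q_def by auto
  have QP: "Q \<subseteq> P" unfolding Q_def by auto
  have sameM: "\<forall>p\<in>AM. \<forall>q\<in>eact y ` AM. gfun cr (a, k) p * gfun cr (a, k) q > 0"
  proof (rule ccontr)
    assume "\<not> ?thesis"
    then obtain p0 q0 where pq: "p0 \<in> AM" "q0 \<in> eact y ` AM" "\<not> gfun cr (a, k) p0 * gfun cr (a, k) q0 > 0" by auto
    have "gfun cr (a, k) p0 \<noteq> 0" using regular_nz[OF regAM aQ pq(1)] .
    moreover have "gfun cr (a, k) q0 \<noteq> 0" using regular_nz[OF regyM aQ pq(2)] .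
    ultimately have "gfun cr (a, k) p0 * gfun cr (a, k) q0 \<noteq> 0" by simp
    then have neg0: "gfun cr (a, k) p0 * gfun cr (a, k) q0 < 0" using pq(3) by linarith
    have sep: "(a, k) \<in> sepset (Q \<times> UNIV) (gfun cr) AM (eact y ` AM)"
      using sep_char[OF regAM regyM pq(1) pq(2) aQ] neg0 by blast
    have "card (sepset (Q \<times> UNIV) (gfun cr) AM (r ` (eact y ` AM)))
        < card (sepset (Q \<times> UNIV) (gfun cr) AM (r ` (r ` (eact y ` AM))))"
    proof (rule AL[where hz = "(a, k)"])
      show "\<And>v. r (r v) = v" by (rule rr)
      show "(a, k) \<in> Q \<times> UNIV" by (rule aQ)
      show "\<exists>j\<in>Q \<times> UNIV. \<exists>e. (e = 1 \<or> e = -1) \<and> (\<forall>v. gfun cr j (r v) = e * gfun cr i v)"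
        if "i \<in> Q \<times> UNIV" for i
        using affrefl_sig[OF rd ps cl, of a i k] a that unfolding Q_def r_def t_def by auto
      show "i = j" if "i \<in> Q \<times> UNIV" "j \<in> Q \<times> UNIV" "e = 1 \<or> e = -1" "\<forall>v. gfun cr i v = e * gfun cr j v" for i j e
        using gfun_uniq[OF rd ps QP that] .
      show "\<exists>c. \<forall>v. gfun cr i (r v) = gfun cr i v - gfun cr (a, k) v * c" if "i \<in> Q \<times> UNIV" for i
      proof -
        obtain a' k' where "i = (a', k')" by fastforce
        then show ?thesis unfolding r_def t_def using affrefl_g by blast
      qed
      show "\<And>v. gfun cr (a, k) (r v) = - gfun cr (a, k) v"
        unfolding r_def t_def using affrefl_flip[where b=a and cr=cr, OF two_a] .
      show "regular (Q \<times> UNIV) (gfun cr) AM" by (rule regAM)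
      show "regular (Q \<times> UNIV) (gfun cr) (r ` (eact y ` AM))" by (rule regtyM)
      show "regular (Q \<times> UNIV) (gfun cr) (r ` r ` eact y ` AM)"
        using regyM by (simp add: image_comp rr comp_def)
      show "AM \<noteq> {}" by (rule AMne)
      show "r ` eact y ` AM \<noteq> {}" using AMne by auto
      show "\<forall>p\<in>AM. \<forall>q\<in>r ` eact y ` AM. 0 < gfun cr (a, k) p * gfun cr (a, k) q"
      proof (intro ballI)
        fix p q assume p: "p \<in> AM" and q: "q \<in> r ` eact y ` AM"
        then obtain q' where q': "q' \<in> eact y ` AM" "q = r q'" by auto
        have "gfun cr (a, k) p * gfun cr (a, k) q' < 0" using sep p q'(1) unfolding sepset_def by auto
        moreover have "gfun cr (a, k) q = - gfun cr (a, k) q'"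
          unfolding q'(2) r_def t_def using affrefl_flip[where b=a and cr=cr, OF two_a] .
        ultimately show "0 < gfun cr (a, k) p * gfun cr (a, k) q" by simp
      qed
      obtain p1 where p1: "p1 \<in> AM" using AMne by auto
      show "finite (sepset (Q \<times> UNIV) (gfun cr) AM (r ` r ` eact y ` AM))"
        by (rule sep_finite[OF finQ p1]) (use p1 in auto)
    qed
    then have "afflen Q cr (emult t y) < afflen Q cr y"
      unfolding afflen_eq AM_def[symmetric] tyimg by (simp add: image_comp rr comp_def)
    then show False using len unfolding t_def Q_def by simp
  qed
  obtain b where b: "b \<in> R" "rvec b = u' (rvec a)" "\<forall>z. u' z \<bullet> rvec (cr b) = z \<bullet> rvec (cr a)"
    using weyl_root[OF rd clR u'(1) aR] by blast
  have bP: "b \<in> P" using pos a b(2) rvec_eq_iff by metis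
  have two_b: "rvec b \<bullet> rvec (cr b) = 2" using rd_two'[OF rd b(1)] .
  have linu: "linear u" using weyl_linear[OF u] .
  have linu': "linear u'" using weyl_linear[OF u'(1)] .
  have uu': "u' (u x) = x" "u (u' x) = x" for x using u'(2,3) by (metis comp_apply id_apply)+
  have comm: "u' (refl a (cr a) x) = refl b (cr b) (u' x)" for x
  proof -
    have "u' (refl a (cr a) x) = u' x - (x \<bullet> rvec (cr a)) *\<^sub>R u' (rvec a)"
      unfolding refl_def pairing_def using linear_diff[OF linu'] linear_cmul[OF linu'] by simp
    also have "\<dots> = refl b (cr b) (u' x)" unfolding refl_def pairing_def b(2)[symmetric] b(3)[rule_format] ..
    finally show ?thesis .
  qed
  define tb where "tb = affrefl cr b k"
  have linw: "linear w" using weyl_linear[OF yy(3)] .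
  have cjy: "cj u' u y = (u' lam, u' \<circ> w \<circ> u)" using cj_eq[OF _ linu'] linw yy(1) by simp
  have ty_eq: "emult t y = (of_int k *\<^sub>R rvec a + refl a (cr a) lam, refl a (cr a) \<circ> w)"
    unfolding t_def affrefl_def emult_def yy(1) by simp
  have linsw: "linear (refl a (cr a) \<circ> w)" using linear_compose[OF linw refl_linear] .
  have cjty: "cj u' u (emult t y) = emult tb (cj u' u y)"
  proof -
    have "cj u' u (emult t y) = (u' (of_int k *\<^sub>R rvec a + refl a (cr a) lam), u' \<circ> (refl a (cr a) \<circ> w) \<circ> u)"
      unfolding ty_eq using cj_eq[OF _ linu'] linsw by simp
    also have "\<dots> = (of_int k *\<^sub>R rvec b + refl b (cr b) (u' lam), refl b (cr b) \<circ> (u' \<circ> w \<circ> u))"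
      using linear_add[OF linu'] linear_cmul[OF linu'] comm b(2) by (auto simp: fun_eq_iff)
    also have "\<dots> = emult tb (cj u' u y)" unfolding cjy tb_def affrefl_def emult_def by simp
    finally show ?thesis .
  qed
  have cjy_ext: "u' lam \<in> lattice" "u' \<circ> w \<circ> u \<in> weyl R cr"
    using weyl_lattice[OF u'(1) yy(2)] weyl_comp[OF weyl_comp[OF u'(1) weyl_mono[OF yy(3) RMR]] u] by auto
  have lintb: "linear (snd tb)" unfolding tb_def affrefl_def by (simp add: refl_linear)
  define r' where "r' = eact tb"
  have rr': "r' (r' v) = v" for v unfolding r'_def tb_def using affrefl_rr[where b=b and cr=cr, OF two_b] .
  have tbimg: "eact (emult tb x) ` X = r' ` (eact x ` X)" for x X unfolding r'_def using eact_emult_img[OF lintb] .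
  have regAG: "regular (P \<times> UNIV) (gfun cr) AG"
    using alc_regular_base[OF rd ps clR] unfolding AG_def PRe .
  have regC: "regular (P \<times> UNIV) (gfun cr) (eact (cj u' u y) ` AG)"
    using alc_regular[OF rd ps clR cjy_ext] unfolding AG_def PRe cjy .
  have cjty_ext: "emult tb (cj u' u y) \<in> ext_weyl R cr"
    using ext_weyl_step[where y="cj u' u y" and S=R and a=b and cr=cr and k=k] cjy cjy_ext b(1) unfolding tb_def ext_weyl_def by auto
  obtain lam3 w3 where l3: "emult tb (cj u' u y) = (lam3, w3)" "lam3 \<in> lattice" "w3 \<in> weyl R cr"
    using cjty_ext unfolding ext_weyl_def by auto
  have regrC: "regular (P \<times> UNIV) (gfun cr) (r' ` (eact (cj u' u y) ` AG))"
    using alc_regular[OF rd ps clR l3(2,3)] unfolding AG_def PRe l3(1)[symmetric] tbimg .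
  have bQ: "(b, k) \<in> P \<times> UNIV" using bP by auto
  have uAG: "u p \<in> AM" if p: "p \<in> AG" for p
    unfolding AM_def base_alcove_def
  proof (intro CollectI ballI)
    fix a' assume a': "a' \<in> Q"
    have a'R: "a' \<in> R" using a' Q_def PR by auto
    obtain b' where b': "b' \<in> R" "rvec b' = u' (rvec a')" "\<forall>z. u' z \<bullet> rvec (cr b') = z \<bullet> rvec (cr a')"
      using weyl_root[OF rd clR u'(1) a'R] by blast
    have "b' \<in> P" using pos a' b'(2) rvec_eq_iff unfolding Q_def by metis
    then have "0 < pairing p (cr b') \<and> pairing p (cr b') < 1" using p unfolding AG_def base_alcove_def by auto
    moreover have "pairing p (cr b') = pairing (u p) (cr a')" unfolding pairing_def
      using b'(3)[rule_format, of "u p"] uu' by simp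
    ultimately show "0 < pairing (u p) (cr a') \<and> pairing (u p) (cr a') < 1" by simp
  qed
  have gconj: "gfun cr (b, k) (u' z) = gfun cr (a, k) z" for z
    unfolding gfun_def pairing_def using b(3) by simp
  have sameG: "\<forall>p\<in>AG. \<forall>q\<in>eact (cj u' u y) ` AG. gfun cr (b, k) p * gfun cr (b, k) q > 0"
  proof (intro ballI)
    fix p q assume p: "p \<in> AG" and q: "q \<in> eact (cj u' u y) ` AG"
    then obtain p' where p': "p' \<in> AG" "q = eact (cj u' u y) p'" by auto
    have e1: "eact (cj u' u y) p' = u' lam + u' (w (u p'))" by (simp add: cjy eact_def)
    have e2: "eact y (u p') = lam + w (u p')" by (simp add: yy(1) eact_def)
    have "q = u' (eact y (u p'))"
      unfolding p'(2) e1 e2 linear_add[OF linu'] ..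
    then have gq: "gfun cr (b, k) q = gfun cr (a, k) (eact y (u p'))" using gconj by simp
    have gp: "gfun cr (b, k) p = gfun cr (a, k) (u p)" using gconj[of "u p"] uu' by simp
    show "gfun cr (b, k) p * gfun cr (b, k) q > 0"
      unfolding gp gq using sameM uAG[OF p] uAG[OF p'(1)] by auto
  qed
  have "card (sepset (P \<times> UNIV) (gfun cr) AG (eact (cj u' u y) ` AG))
      < card (sepset (P \<times> UNIV) (gfun cr) AG (r' ` (eact (cj u' u y) ` AG)))"
  proof (rule AL[where hz = "(b, k)"])
    show "\<And>v. r' (r' v) = v" by (rule rr')
    show "(b, k) \<in> P \<times> UNIV" by (rule bQ)
    show "\<exists>j\<in>P \<times> UNIV. \<exists>e. (e = 1 \<or> e = -1) \<and> (\<forall>v. gfun cr j (r' v) = e * gfun cr i v)"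
      if "i \<in> P \<times> UNIV" for i
      using affrefl_sig[OF rd ps clR, of b i k] bP that unfolding PRe r'_def tb_def by auto
    show "i = j" if "i \<in> P \<times> UNIV" "j \<in> P \<times> UNIV" "e = 1 \<or> e = -1" "\<forall>v. gfun cr i v = e * gfun cr j v" for i j e
      using gfun_uniq[OF rd ps subset_refl that] .
    show "\<exists>c. \<forall>v. gfun cr i (r' v) = gfun cr i v - gfun cr (b, k) v * c" if "i \<in> P \<times> UNIV" for i
    proof -
      obtain a' k' where "i = (a', k')" by fastforce
      then show ?thesis unfolding r'_def tb_def using affrefl_g by blast
    qed
    show "\<And>v. gfun cr (b, k) (r' v) = - gfun cr (b, k) v"
      unfolding r'_def tb_def using affrefl_flip[where b=b and cr=cr, OF two_b] .
    show "regular (P \<times> UNIV) (gfun cr) AG" by (rule regAG)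
    show "regular (P \<times> UNIV) (gfun cr) (eact (cj u' u y) ` AG)" by (rule regC)
    show "regular (P \<times> UNIV) (gfun cr) (r' ` (eact (cj u' u y) ` AG))" by (rule regrC)
    show "AG \<noteq> {}" by (rule AGne)
    show "eact (cj u' u y) ` AG \<noteq> {}" using AGne by auto
    show "\<forall>p\<in>AG. \<forall>q\<in>eact (cj u' u y) ` AG. 0 < gfun cr (b, k) p * gfun cr (b, k) q" using sameG by auto
    obtain p1 where p1: "p1 \<in> AG" using AGne by auto
    show "finite (sepset (P \<times> UNIV) (gfun cr) AG (r' ` eact (cj u' u y) ` AG))"
      by (rule sep_finite[OF finP p1]) (use p1 in auto)
  qed
  then have "afflen P cr (cj u' u y) < afflen P cr (emult tb (cj u' u y))"
    unfolding afflen_eq AG_def[symmetric] tbimg .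
  then have "(cj u' u y, emult (affrefl cr b k) (cj u' u y)) \<in> bruhat_step P cr"
    unfolding bruhat_step_def tb_def using bP by blast
  then show ?thesis using cjty unfolding t_def tb_def by simp
qed




lemma rtr_conj:
  assumes rd: "reduced_root_datum R cr" and ps: "pos_system R P" and lv: "levi_roots R RM"
    and u: "u \<in> weyl R cr" and u': "u' \<in> weyl R cr" "u' \<circ> u = id" "u \<circ> u' = id"
    and pos: "\<forall>a\<in>P \<inter> RM. \<exists>b\<in>P. rvec b = u' (rvec a)"
    and st: "(x, z) \<in> (bruhat_step (P \<inter> RM) cr)\<^sup>*" and x: "x \<in> ext_weyl RM cr"
  shows "(cj u' u x, cj u' u z) \<in> (bruhat_step P cr)\<^sup>* \<and> z \<in> ext_weyl RM cr"
  using st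
proof (induction rule: rtrancl_induct)
  case base then show ?case using x by simp
next
  case (step y z)
  then have y: "y \<in> ext_weyl RM cr" and IH: "(cj u' u x, cj u' u y) \<in> (bruhat_step P cr)\<^sup>*" by auto
  from step(2) obtain a k where ak: "z = emult (affrefl cr a k) y" "a \<in> P \<inter> RM"
    "afflen (P \<inter> RM) cr y < afflen (P \<inter> RM) cr (emult (affrefl cr a k) y)"
    unfolding bruhat_step_def by blast
  have "(cj u' u y, cj u' u z) \<in> bruhat_step P cr"
    unfolding ak(1) by (rule step_conj[OF rd ps lv u u' pos y ak(2,3)])
  moreover have "z \<in> ext_weyl RM cr" unfolding ak(1) using ext_weyl_step[OF y] ak(2) by auto
  ultimately show ?case using IH by auto
qed

theorem mainTheorem14:
  fixes R RM P :: "(int ^ 'n) set" and cr :: "int ^ 'n \<Rightarrow> int ^ 'n"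
    and lam :: "int ^ 'n" and u :: "real ^ 'n \<Rightarrow> real ^ 'n"
  assumes "reduced_root_datum R cr"
    and "pos_system R P"
    and "levi_roots R RM"
    and "u \<in> WM_set R RM P cr"
  shows "(\<lambda>x. emult (0, inv u) (emult x (0, u))) ` Adm RM (P \<inter> RM) cr lam
           \<subseteq> Adm R P cr lam"
proof -
  note rd = assms(1) and ps = assms(2) and lv = assms(3) and uW = assms(4)
  have u: "u \<in> weyl R cr" using uW unfolding WM_set_def by auto
  obtain u' where u': "u' \<in> weyl R cr" "u' \<circ> u = id" "u \<circ> u' = id"
    using weyl_inv[OF rd subset_refl u] by blast
  have invu: "inv u = u'" using inv_unique_comp[OF u'(3) u'(2)] .
  have pos: "\<forall>a\<in>P \<inter> RM. \<exists>b\<in>P. rvec b = u' (rvec a)" using WM_pos[OF rd ps lv uW u'] .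
  have RMR: "RM \<subseteq> R" using lv unfolding levi_roots_def by auto
  have linu': "linear u'" using weyl_linear[OF u'(1)] .
  have uu': "u' (u x) = x" for x using u'(2) by (metis comp_apply id_apply)
  show ?thesis
  proof
    fix X assume "X \<in> (\<lambda>x. emult (0, inv u) (emult x (0, u))) ` Adm RM (P \<inter> RM) cr lam"
    then obtain x where x: "x \<in> Adm RM (P \<inter> RM) cr lam" "X = cj u' u x"
      unfolding cj_def invu by auto
    from x(1) have xe: "x \<in> ext_weyl RM cr" and
      "\<exists>w\<in>weyl RM cr. bruhat_le (P \<inter> RM) cr x (w (rvec lam), id)"
      unfolding Adm_def by auto
    then obtain w where w: "w \<in> weyl RM cr" "bruhat_le (P \<inter> RM) cr x (w (rvec lam), id)" by blast
    obtain l0 w0 where xx: "x = (l0, w0)" "l0 \<in> lattice" "w0 \<in> weyl RM cr" using xe unfolding ext_weyl_def by auto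
    have "cj u' u x = (u' l0, u' \<circ> w0 \<circ> u)"
      using cj_eq[OF _ linu'] weyl_linear[OF xx(3)] xx(1) by simp
    moreover have "u' l0 \<in> lattice" using weyl_lattice[OF u'(1) xx(2)] .
    moreover have "u' \<circ> w0 \<circ> u \<in> weyl R cr"
      using weyl_comp[OF weyl_comp[OF u'(1) weyl_mono[OF xx(3) RMR]] u] .
    ultimately have Xe: "X \<in> ext_weyl R cr" using x(2) unfolding ext_weyl_def by simp
    have "(cj u' u x, cj u' u (w (rvec lam), id)) \<in> (bruhat_step P cr)\<^sup>*"
      using rtr_conj[OF rd ps lv u u' pos _ xe] w(2) unfolding bruhat_le_def by blast
    moreover have "cj u' u (w (rvec lam), id) = ((u' \<circ> w) (rvec lam), id)"
      using cj_eq[OF _ linu', of "(w (rvec lam), id)" u] u'(2) by (simp add: linear_id)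
    ultimately have "bruhat_le P cr X ((u' \<circ> w) (rvec lam), id)"
      unfolding bruhat_le_def x(2) by simp
    moreover have "u' \<circ> w \<in> weyl R cr" using weyl_comp[OF u'(1) weyl_mono[OF w(1) RMR]] .
    ultimately show "X \<in> Adm R P cr lam" unfolding Adm_def using Xe by blast
  qed
qed



end
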